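(* For all closed terms $t_0,t_1$ of $\lambda_S$, if $t_0 \approx_{\emptyset} t_1$ then $t_0 \equiv t_1$.
   Context: Terms of $\lambda_S$: $t ::= x \mid \lambda x.t \mid t\,t \mid \mathcal{S}k.t \mid \langle t\rangle$ (shift $\mathcal{S}k.t$ binds $k$, reset $\langle t\rangle$), taken up to $\alpha$-conversion; $\mathrm{fv}(t)$ is the set of free variables and $t$ is closed if $\mathrm{fv}(t)=\emptyset$. Values: $v ::= \lambda x.t$. Pure contexts $E ::= \Box \mid v\,E \mid E\,t$; evaluation contexts $F ::= \Box \mid v\,F \mid F\,t \mid \langle F\rangle$; contexts $C ::= \Box \mid \lambda x.C \mid t\,C \mid C\,t \mid \mathcal{S}k.C \mid \langle C\rangle$ (filling may capture variables). Reduction: $F[(\lambda x.t)\,v] \to F[t\{v/x\}]$; $F[\langle E[\mathcal{S}k.t]\rangle] \to F[\langle t\{\lambda x.\langle E[x]\rangle/k\}\rangle]$ ($x\notin\mathrm{fv}(E)$); $F[\langle v\rangle]\to F[v]$. $\to^*$ is the reflexive-transitive closure; $t\Downarrow t'$ means $t\to^* t'$ and $t'$ is irreducible. A term is stuck if it is not a value and is irreducible; a normal form is a value or a stuck term. Closures: for a relation $R$ on closed terms, $\widetilde R$ is the smallest relation on terms containing $R$, all pairs $(x,x)$ for variables $x$, and closed under the constructors ($t_0\widetilde R t_1$ implies $\lambda x.t_0\widetilde R\lambda x.t_1$, $\mathcal S k.t_0\widetilde R\mathcal Sk.t_1$, $\langle t_0\rangle\widetilde R\langle t_1\rangle$; $t_0\widetilde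 R t_1$ and $t_0'\widetilde R t_1'$ imply $t_0t_0'\widetilde R t_1t_1'$), restricted to closed terms. $\widehat R$ is the smallest relation on closed evaluation contexts with $\Box\widehat R\Box$; $v_0F_0\widehat R v_1F_1$ if $F_0\widehat R F_1$, $v_0\widetilde R v_1$; $F_0t_0\widehat R F_1t_1$ if $F_0\widehat RF_1$, $t_0\widetilde R t_1$; $\langle F_0\rangle\widehat R\langle F_1\rangle$ if $F_0\widehat RF_1$ (in particular it relates pure contexts). Environmental bisimilarity: an environment $\mathcal E$ is a relation on closed normal forms relating values only to values and stuck terms only to stuck terms. An environmental relation $\mathcal X$ is a set of environments and of triples $(\mathcal E,t_0,t_1)$ with $t_0,t_1$ closed; write $t_0\,\mathcal X_{\mathcal E}\,t_1$. $\mathcal X$ is an environmental bisimulation if (1) whenever $t_0\,\mathcal X_{\mathcal E}\,t_1$: (a) if $t_0\to t_0'$ then $t_1\to^* t_1'$ with $t_0'\,\mathcal X_{\mathcal E}\,t_1'$; (b) if $t_0$ is a value $v_0$ then $t_1\to^* v_1$ for a value $v_1$ and $\mathcal E\cup\{(v_0,v_1)\}\in\mathcal X$; (c) if $t_0$ is stuck then $t_1\to^* t_1'$ with $t_1'$ stuck and $\mathcal E\cup\{(t_0,t_1')\}\in\mathcal X$; (d) the symmetric conditions with $t_0,t_1$ swapped; (2) whenever $\mathcal E\in\mathcal X$: (a) if $(\lambda x.t_0)\,\mathcal E\,(\lambda x.t_1)$ and $v_0\widetilde{\mathcal E}v_1$ then $t_0\{v_0/x\}\,\mathcal X_{\mathcal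 E}\,t_1\{v_1/x\}$; (b) if $E_0[\mathcal Sk.t_0]\,\mathcal E\,E_1[\mathcal Sk.t_1]$ and $E_0'\widehat{\mathcal E}E_1'$ (pure contexts), then $\langle t_0\{\lambda x.\langle E_0'[E_0[x]]\rangle/k\}\rangle\,\mathcal X_{\mathcal E}\,\langle t_1\{\lambda x.\langle E_1'[E_1[x]]\rangle/k\}\rangle$ for fresh $x$. $\approx$ is the largest environmental bisimulation; $t_0\approx_{\mathcal E}t_1$ means $(\mathcal E,t_0,t_1)\in\approx$. Contextual equivalence: $t_0\equiv t_1$ iff for every context $C$ with $C[t_0],C[t_1]$ closed, $C[t_0]\Downarrow$ a value iff $C[t_1]\Downarrow$ a value, and $C[t_0]\Downarrow$ a stuck term iff $C[t_1]\Downarrow$ a stuck term. *)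

theory Defs
  imports Main
begin

section \<open>Terms of lambda_S (de Bruijn indices, i.e. terms up to alpha-conversion)\<close>

text \<open>Var i is a de Bruijn index; Lam t binds index 0 in t; Shift t binds the
  continuation variable k as index 0 in t; Reset t is the delimiter.\<close>

datatype trm = Var nat | Lam trm | App trm trm | Shift trm | Reset trm

fun closedn :: "nat \<Rightarrow> trm \<Rightarrow> bool" where
  "closedn k (Var i) = (i < k)"
| "closedn k (Lam t) = closedn (Suc k) t"
| "closedn k (App s t) = (closedn k s \<and> closedn k t)"
| "closedn k (Shift t) = closedn (Suc k) t"
| "closedn k (Reset t) = closedn k t"

definition closed :: "trm \<Rightarrow> bool" where
  "closed t \<longleftrightarrow> closedn 0 t"

fun is_val :: "trm \<Rightarrow> bool" where
  "is_val (Lam t) = True"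
| "is_val _ = False"

fun lift :: "nat \<Rightarrow> trm \<Rightarrow> trm" where
  "lift k (Var i) = (if i < k then Var i else Var (Suc i))"
| "lift k (Lam t) = Lam (lift (Suc k) t)"
| "lift k (App s t) = App (lift k s) (lift k t)"
| "lift k (Shift t) = Shift (lift (Suc k) t)"
| "lift k (Reset t) = Reset (lift k t)"

fun subst :: "nat \<Rightarrow> trm \<Rightarrow> trm \<Rightarrow> trm" where
  "subst k u (Var i) = (if i < k then Var i else if i = k then u else Var (i - 1))"
| "subst k u (Lam t) = Lam (subst (Suc k) (lift 0 u) t)"
| "subst k u (App s t) = App (subst k u s) (subst k u t)"
| "subst k u (Shift t) = Shift (subst (Suc k) (lift 0 u) t)"
| "subst k u (Reset t) = Reset (subst k u t)"

text \<open>t{v/x} where x is the outermost bound variable of the body t.\<close>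
abbreviation subst0 :: "trm \<Rightarrow> trm \<Rightarrow> trm" where
  "subst0 u t \<equiv> subst 0 u t"

text \<open>General contexts C; filling is plain replacement of the hole (it may capture).\<close>
datatype ctx = Hole | CLam ctx | CAppR trm ctx | CAppL ctx trm | CShift ctx | CReset ctx

fun plug :: "ctx \<Rightarrow> trm \<Rightarrow> trm" where
  "plug Hole t = t"
| "plug (CLam C) t = Lam (plug C t)"
| "plug (CAppR s C) t = App s (plug C t)"
| "plug (CAppL C s) t = App (plug C t) s"
| "plug (CShift C) t = Shift (plug C t)"
| "plug (CReset C) t = Reset (plug C t)"

fun is_pctx :: "ctx \<Rightarrow> bool" where
  "is_pctx Hole = True"
| "is_pctx (CAppR v E) = (is_val v \<and> is_pctx E)"
| "is_pctx (CAppL E t) = is_pctx E"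
| "is_pctx _ = False"

fun is_fctx :: "ctx \<Rightarrow> bool" where
  "is_fctx Hole = True"
| "is_fctx (CAppR v F) = (is_val v \<and> is_fctx F)"
| "is_fctx (CAppL F t) = is_fctx F"
| "is_fctx (CReset F) = is_fctx F"
| "is_fctx _ = False"

fun lift_ctx :: "nat \<Rightarrow> ctx \<Rightarrow> ctx" where
  "lift_ctx k Hole = Hole"
| "lift_ctx k (CLam C) = CLam (lift_ctx (Suc k) C)"
| "lift_ctx k (CAppR s C) = CAppR (lift k s) (lift_ctx k C)"
| "lift_ctx k (CAppL C s) = CAppL (lift_ctx k C) (lift k s)"
| "lift_ctx k (CShift C) = CShift (lift_ctx (Suc k) C)"
| "lift_ctx k (CReset C) = CReset (lift_ctx k C)"

text \<open>The continuation \<lambda>x.<E[x]> (x fresh), as a de Bruijn term.\<close>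
definition cont :: "ctx \<Rightarrow> trm" where
  "cont E = Lam (Reset (plug (lift_ctx 0 E) (Var 0)))"

text \<open>The continuation \<lambda>x.<E'[E[x]]> (x fresh).\<close>
definition cont2 :: "ctx \<Rightarrow> ctx \<Rightarrow> trm" where
  "cont2 E' E = Lam (Reset (plug (lift_ctx 0 E') (plug (lift_ctx 0 E) (Var 0))))"

inductive red :: "trm \<Rightarrow> trm \<Rightarrow> bool" where
  beta: "is_fctx F \<Longrightarrow> is_val v \<Longrightarrow> red (plug F (App (Lam t) v)) (plug F (subst0 v t))"
| shift: "is_fctx F \<Longrightarrow> is_pctx E \<Longrightarrow>
     red (plug F (Reset (plug E (Shift t)))) (plug F (Reset (subst0 (cont E) t)))"
| reset: "is_fctx F \<Longrightarrow> is_val v \<Longrightarrow> red (plug F (Reset v)) (plug F v)"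

abbreviation reds :: "trm \<Rightarrow> trm \<Rightarrow> bool" where
  "reds \<equiv> red\<^sup>*\<^sup>*"

definition irreducible :: "trm \<Rightarrow> bool" where
  "irreducible t \<longleftrightarrow> (\<nexists>u. red t u)"

definition evals :: "trm \<Rightarrow> trm \<Rightarrow> bool" where
  "evals t t' \<longleftrightarrow> reds t t' \<and> irreducible t'"

definition stuck :: "trm \<Rightarrow> bool" where
  "stuck t \<longleftrightarrow> \<not> is_val t \<and> irreducible t"

type_synonym rel = "(trm \<times> trm) set"

inductive tclos :: "rel \<Rightarrow> trm \<Rightarrow> trm \<Rightarrow> bool" for R where
  base: "(s, t) \<in> R \<Longrightarrow> tclos R s t"
| var: "tclos R (Var i) (Var i)"
| lam: "tclos R s t \<Longrightarrow> tclos R (Lam s) (Lam t)"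
| shft: "tclos R s t \<Longrightarrow> tclos R (Shift s) (Shift t)"
| rst: "tclos R s t \<Longrightarrow> tclos R (Reset s) (Reset t)"
| app: "tclos R s t \<Longrightarrow> tclos R s' t' \<Longrightarrow> tclos R (App s s') (App t t')"

definition rtilde :: "rel \<Rightarrow> trm \<Rightarrow> trm \<Rightarrow> bool" where
  "rtilde R s t \<longleftrightarrow> tclos R s t \<and> closed s \<and> closed t"

inductive rhat :: "rel \<Rightarrow> ctx \<Rightarrow> ctx \<Rightarrow> bool" for R where
  hole: "rhat R Hole Hole"
| argr: "rhat R F0 F1 \<Longrightarrow> is_val v0 \<Longrightarrow> is_val v1 \<Longrightarrow> rtilde R v0 v1 \<Longrightarrow>
     rhat R (CAppR v0 F0) (CAppR v1 F1)"
| funl: "rhat R F0 F1 \<Longrightarrow> rtilde R t0 t1 \<Longrightarrow> rhat R (CAppL F0 t0) (CAppL F1 t1)"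
| rst: "rhat R F0 F1 \<Longrightarrow> rhat R (CReset F0) (CReset F1)"

definition is_env :: "rel \<Rightarrow> bool" where
  "is_env E \<longleftrightarrow> (\<forall>(a, b) \<in> E. closed a \<and> closed b \<and>
      ((is_val a \<and> is_val b) \<or> (stuck a \<and> stuck b)))"

text \<open>An environmental relation is given by its set of environments Es and its
  set of triples Ts.\<close>
definition env_rel :: "rel set \<Rightarrow> (rel \<times> trm \<times> trm) set \<Rightarrow> bool" where
  "env_rel Es Ts \<longleftrightarrow> (\<forall>E \<in> Es. is_env E) \<and>
     (\<forall>(E, t0, t1) \<in> Ts. is_env E \<and> closed t0 \<and> closed t1)"

definition env_bisim :: "rel set \<Rightarrow> (rel \<times> trm \<times> trm) set \<Rightarrow> bool" where
  "env_bisim Es Ts \<longleftrightarrow> env_rel Es Ts \<and>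
    (\<forall>E t0 t1. (E, t0, t1) \<in> Ts \<longrightarrow>
       (\<forall>t0'. red t0 t0' \<longrightarrow> (\<exists>t1'. reds t1 t1' \<and> (E, t0', t1') \<in> Ts)) \<and>
       (is_val t0 \<longrightarrow> (\<exists>v1. reds t1 v1 \<and> is_val v1 \<and> insert (t0, v1) E \<in> Es)) \<and>
       (stuck t0 \<longrightarrow> (\<exists>t1'. reds t1 t1' \<and> stuck t1' \<and> insert (t0, t1') E \<in> Es)) \<and>
       (\<forall>t1'. red t1 t1' \<longrightarrow> (\<exists>t0'. reds t0 t0' \<and> (E, t0', t1') \<in> Ts)) \<and>
       (is_val t1 \<longrightarrow> (\<exists>v0. reds t0 v0 \<and> is_val v0 \<and> insert (v0, t1) E \<in> Es)) \<and>
       (stuck t1 \<longrightarrow> (\<exists>t0'. reds t0 t0' \<and> stuck t0' \<and> insert (t0', t1) E \<in> Es))) \<and>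
    (\<forall>E \<in> Es.
       (\<forall>s0 s1 v0 v1. (Lam s0, Lam s1) \<in> E \<longrightarrow> is_val v0 \<longrightarrow> is_val v1 \<longrightarrow>
           rtilde E v0 v1 \<longrightarrow> (E, subst0 v0 s0, subst0 v1 s1) \<in> Ts) \<and>
       (\<forall>E0 E1 s0 s1 E0' E1'. is_pctx E0 \<longrightarrow> is_pctx E1 \<longrightarrow>
           (plug E0 (Shift s0), plug E1 (Shift s1)) \<in> E \<longrightarrow>
           is_pctx E0' \<longrightarrow> is_pctx E1' \<longrightarrow> rhat E E0' E1' \<longrightarrow>
           (E, Reset (subst0 (cont2 E0' E0) s0), Reset (subst0 (cont2 E1' E1) s1)) \<in> Ts))"

text \<open>The largest environmental bisimulation (union of all of them):
  approx E t0 t1 means t0 \<approx>_E t1.\<close>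
definition approx :: "rel \<Rightarrow> trm \<Rightarrow> trm \<Rightarrow> bool" where
  "approx E t0 t1 \<longleftrightarrow> (\<exists>Es Ts. env_bisim Es Ts \<and> (E, t0, t1) \<in> Ts)"

definition ctx_equiv :: "trm \<Rightarrow> trm \<Rightarrow> bool" where
  "ctx_equiv t0 t1 \<longleftrightarrow> (\<forall>C. closed (plug C t0) \<longrightarrow> closed (plug C t1) \<longrightarrow>
     ((\<exists>v. evals (plug C t0) v \<and> is_val v) \<longleftrightarrow> (\<exists>v. evals (plug C t1) v \<and> is_val v)) \<and>
     ((\<exists>u. evals (plug C t0) u \<and> stuck u) \<longleftrightarrow> (\<exists>u. evals (plug C t1) u \<and> stuck u)))"

end

theory Submission
  imports Defs
begin



lemma closedn_mono: "closedn j t \<Longrightarrow> j \<le> k \<Longrightarrow> closedn k t"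
  by (induction j t arbitrary: k rule: closedn.induct) auto

lemma lift_closed: "closedn j t \<Longrightarrow> j \<le> k \<Longrightarrow> lift k t = t"
  by (induction j t arbitrary: k rule: closedn.induct) auto

lemma subst_closed: "closedn j t \<Longrightarrow> j \<le> k \<Longrightarrow> subst k u t = t"
  by (induction j t arbitrary: k u rule: closedn.induct) auto

lemma closedn_lift: "closedn n u \<Longrightarrow> closedn (Suc n) (lift k u)"
  by (induction u arbitrary: n k) auto

lemma closedn_subst: "closedn (Suc n) t \<Longrightarrow> closedn n u \<Longrightarrow> k \<le> n \<Longrightarrow> closedn n (subst k u t)"
proof (induction t arbitrary: n k u)
  case (Lam t) then show ?case using Lam.IH[of "Suc n" "lift 0 u" "Suc k"] closedn_lift[of n u 0] by auto
next
  case (Shift t) then show ?case using Shift.IH[of "Suc n" "lift 0 u" "Suc k"] closedn_lift[of n u 0] by auto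
qed auto

fun ccomp :: "ctx \<Rightarrow> ctx \<Rightarrow> ctx" where
  "ccomp Hole G = G"
| "ccomp (CLam F) G = CLam (ccomp F G)"
| "ccomp (CAppR s F) G = CAppR s (ccomp F G)"
| "ccomp (CAppL F s) G = CAppL (ccomp F G) s"
| "ccomp (CShift F) G = CShift (ccomp F G)"
| "ccomp (CReset F) G = CReset (ccomp F G)"

lemma plug_comp[simp]: "plug (ccomp F G) x = plug F (plug G x)"
  by (induction F) auto

lemma fctx_comp[simp]: "is_fctx (ccomp F G) \<longleftrightarrow> is_fctx F \<and> is_fctx G"
  by (induction F) auto

lemma pctx_comp[simp]: "is_pctx (ccomp F G) \<longleftrightarrow> is_pctx F \<and> is_pctx G"
  by (induction F) auto

lemma pctx_fctx: "is_pctx E \<Longrightarrow> is_fctx E"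
  by (induction E) auto

lemma lift_ctx_comp: "is_fctx F \<Longrightarrow> lift_ctx k (ccomp F G) = ccomp (lift_ctx k F) (lift_ctx k G)"
  by (induction F arbitrary: k) auto

lemma cont_comp: "is_fctx A \<Longrightarrow> cont (ccomp A B) = cont2 A B"
  unfolding cont_def cont2_def by (simp add: lift_ctx_comp)

fun ccl :: "nat \<Rightarrow> ctx \<Rightarrow> bool" where
  "ccl n Hole = True"
| "ccl n (CAppR s C) = (closedn n s \<and> ccl n C)"
| "ccl n (CAppL C s) = (closedn n s \<and> ccl n C)"
| "ccl n (CReset C) = ccl n C"
| "ccl n _ = False"

lemma closedn_plug: "is_fctx F \<Longrightarrow> closedn n (plug F x) \<longleftrightarrow> ccl n F \<and> closedn n x"
  by (induction F) auto

lemma ccl_mono: "ccl j F \<Longrightarrow> j \<le> k \<Longrightarrow> ccl k F"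
  by (induction F) (auto intro: closedn_mono)

lemma lift_ctx_closed: "ccl 0 F \<Longrightarrow> lift_ctx k F = F"
  by (induction F) (auto intro: lift_closed)

lemma ccl_comp[simp]: "ccl n (ccomp F G) \<longleftrightarrow> ccl n F \<and> ccl n G"
  by (induction F) auto

lemma cont_closed: "is_pctx E \<Longrightarrow> ccl 0 E \<Longrightarrow> cont E = Lam (Reset (plug E (Var 0)))"
  unfolding cont_def by (simp add: lift_ctx_closed)

lemma closed_cont: "is_pctx E \<Longrightarrow> ccl 0 E \<Longrightarrow> closedn 0 (cont E)"
  using ccl_mono[of 0 E "Suc 0"] by (simp add: cont_closed closedn_plug pctx_fctx)

section \<open>Values, redexes, stuck terms\<close>

lemma is_val_iff: "is_val v \<longleftrightarrow> (\<exists>t. v = Lam t)"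
  by (cases v) auto

definition redex :: "trm \<Rightarrow> bool" where
  "redex r \<longleftrightarrow> (\<exists>t v. r = App (Lam t) v \<and> is_val v) \<or> (\<exists>v. r = Reset v \<and> is_val v)
     \<or> (\<exists>E t. r = Reset (plug E (Shift t)) \<and> is_pctx E)"

lemma plug_val: "is_fctx F \<Longrightarrow> is_val (plug F x) \<Longrightarrow> F = Hole"
  by (cases F) auto

lemma plug_lam: "is_fctx F \<Longrightarrow> plug F x = Lam t \<Longrightarrow> F = Hole"
  by (cases F) auto

lemma redex_not_lam: "redex r \<Longrightarrow> r \<noteq> Lam t"
  unfolding redex_def by auto

lemma plug_shift_not_val: "is_pctx E \<Longrightarrow> \<not> is_val (plug E (Shift t))"
  by (cases E) auto

lemma redex_not_val: "redex r \<Longrightarrow> \<not> is_val r"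
  unfolding redex_def by auto

lemma shift_no_redex: "is_pctx E \<Longrightarrow> is_fctx F \<Longrightarrow> redex r \<Longrightarrow> plug E (Shift t) \<noteq> plug F r"
proof (induction E arbitrary: F)
  case Hole
  then show ?case by (cases F) (auto simp: redex_def)
next
  case (CAppR v E)
  note IH = CAppR.IH and P = CAppR.prems
  have nv: "\<not> is_val (plug E (Shift t))" using P plug_shift_not_val by simp
  show ?case
  proof (cases F)
    case Hole then show ?thesis using P nv unfolding redex_def by auto
  next
    case (CAppR v' F') then show ?thesis using IH P by auto
  next
    case (CAppL F' s)
    show ?thesis
    proof
      assume "plug (CAppR v E) (Shift t) = plug F r"
      then have "v = plug F' r" using CAppL by simp
      then have "is_val (plug F' r)" "is_fctx F'" using P CAppL by auto
      then show False using plug_val redex_not_val P(3) by fastforce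
    qed
  qed (use P in auto)
next
  case (CAppL E s)
  note IH = CAppL.IH and P = CAppL.prems
  have nv: "\<not> is_val (plug E (Shift t))" using P plug_shift_not_val by simp
  show ?case
  proof (cases F)
    case Hole then show ?thesis using P nv unfolding redex_def by auto
  next
    case (CAppR v' F')
    then show ?thesis using P nv by auto
  next
    case (CAppL F' s') then show ?thesis using IH P by auto
  qed (use P in auto)
qed auto

lemma redex_inner: "redex r \<Longrightarrow> is_fctx G \<Longrightarrow> redex s \<Longrightarrow> r = plug G s \<Longrightarrow> G = Hole"
proof -
  assume r: "redex r" and G: "is_fctx G" and s: "redex s" and eq: "r = plug G s"
  have ns: "\<not> is_val s" using s redex_not_val by blast
  show "G = Hole"
  proof (cases G)
    case (CAppR v G')
    then have "is_fctx G'" using G by simp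
    from r eq CAppR have "is_val (plug G' s)" unfolding redex_def by auto
    then have "G' = Hole" using plug_val \<open>is_fctx G'\<close> by blast
    then show ?thesis using \<open>is_val (plug G' s)\<close> ns by simp
  next
    case (CAppL G' t)
    then have "is_fctx G'" using G by simp
    from r eq CAppL have "is_val (plug G' s)" unfolding redex_def by auto
    then have "G' = Hole" using plug_val \<open>is_fctx G'\<close> by blast
    then show ?thesis using \<open>is_val (plug G' s)\<close> ns by simp
  next
    case (CReset G')
    then have "is_fctx G'" using G by simp
    from r eq CReset have "is_val (plug G' s) \<or> (\<exists>E t. plug G' s = plug E (Shift t) \<and> is_pctx E)"
      unfolding redex_def by auto
    then show ?thesis
    proof
      assume "is_val (plug G' s)"
      then have "G' = Hole" using plug_val \<open>is_fctx G'\<close> by blast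
      then show ?thesis using \<open>is_val (plug G' s)\<close> ns by simp
    next
      assume "\<exists>E t. plug G' s = plug E (Shift t) \<and> is_pctx E"
      then show ?thesis using shift_no_redex \<open>is_fctx G'\<close> s by metis
    qed
  qed (use G in auto)
qed

lemma unique_decomp: "is_fctx F \<Longrightarrow> is_fctx G \<Longrightarrow> redex r \<Longrightarrow> redex s \<Longrightarrow> plug F r = plug G s \<Longrightarrow> F = G \<and> r = s"
proof (induction F arbitrary: G)
  case Hole
  have eq: "r = plug G s" using Hole.prems(5) by simp
  have "G = Hole" by (rule redex_inner[OF Hole.prems(3) Hole.prems(2) Hole.prems(4) eq])
  then show ?case using eq by simp
next
  case (CAppR v F)
  note IH = CAppR.IH and P = CAppR.prems
  show ?case
  proof (cases G)
    case Hole
    then have eq: "s = plug (CAppR v F) r" using P(5) by simp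
    have "CAppR v F = Hole" by (rule redex_inner[OF P(4) P(1) P(3) eq])
    then show ?thesis by simp
  next
    case (CAppR v' G')
    then show ?thesis using IH P by auto
  next
    case (CAppL G' t)
    then have "is_val (plug G' s)" "is_fctx G'" using P by auto
    then have "G' = Hole" using plug_val by blast
    then show ?thesis using \<open>is_val (plug G' s)\<close> P(4) redex_not_val by simp
  qed (use P in auto)
next
  case (CAppL F t)
  note IH = CAppL.IH and P = CAppL.prems
  show ?case
  proof (cases G)
    case Hole
    then have eq: "s = plug (CAppL F t) r" using P(5) by simp
    have "CAppL F t = Hole" by (rule redex_inner[OF P(4) P(1) P(3) eq])
    then show ?thesis by simp
  next
    case (CAppR v' G')
    then have "is_val (plug F r)" "is_fctx F" using P by auto
    then have "F = Hole" using plug_val by blast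
    then show ?thesis using \<open>is_val (plug F r)\<close> P(3) redex_not_val by simp
  next
    case (CAppL G' t')
    then show ?thesis using IH P by auto
  qed (use P in auto)
next
  case (CReset F)
  note IH = CReset.IH and P = CReset.prems
  show ?case
  proof (cases G)
    case Hole
    then have eq: "s = plug (CReset F) r" using P(5) by simp
    have "CReset F = Hole" by (rule redex_inner[OF P(4) P(1) P(3) eq])
    then show ?thesis by simp
  next
    case (CReset G')
    then show ?thesis using IH P by auto
  qed (use P in auto)
qed auto

lemma pctx_shift_inj: "is_pctx E \<Longrightarrow> is_pctx E' \<Longrightarrow> plug E (Shift t) = plug E' (Shift t') \<Longrightarrow> E = E' \<and> t = t'"
proof (induction E arbitrary: E')
  case Hole then show ?case by (cases E') auto
next
  case (CAppR v E)
  note IH = CAppR.IH and P = CAppR.prems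
  show ?case
  proof (cases E')
    case Hole then show ?thesis using P by simp
  next
    case (CAppR v' E'') then show ?thesis using P IH[of E''] by simp
  next
    case (CAppL E'' s) then show ?thesis using P plug_shift_not_val[of E'' t'] by simp
  qed (use P in simp_all)
next
  case (CAppL E s)
  note IH = CAppL.IH and P = CAppL.prems
  show ?case
  proof (cases E')
    case Hole then show ?thesis using P by simp
  next
    case (CAppR v E'') then show ?thesis using P plug_shift_not_val[of E t] by simp
  next
    case (CAppL E'' s') then show ?thesis using P IH[of E''] by simp
  qed (use P in simp_all)
qed (simp_all only: is_pctx.simps simp_thms)

lemma red_redex: "red t u \<Longrightarrow> \<exists>F r. is_fctx F \<and> redex r \<and> t = plug F r"
  by (induction rule: red.induct) (unfold redex_def, blast+)

lemma red_det: assumes r1: "red t u1" and r2: "red t u2" shows "u1 = u2"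
  using r1
proof cases
  case (beta F v b)
  note h = beta
  from r2 show ?thesis
  proof (cases rule: red.cases)
    case (beta G w c)
    have "F = G \<and> App (Lam b) v = App (Lam c) w"
      by (rule unique_decomp) (use h beta in \<open>auto simp: redex_def\<close>)
    then show ?thesis using h beta by simp
  next
    case (shift G E c)
    have "F = G \<and> App (Lam b) v = Reset (plug E (Shift c))"
      by (rule unique_decomp) (use h shift in \<open>auto simp: redex_def\<close>)
    then show ?thesis by simp
  next
    case (reset G w)
    have "F = G \<and> App (Lam b) v = Reset w"
      by (rule unique_decomp) (use h reset in \<open>auto simp: redex_def\<close>)
    then show ?thesis by simp
  qed
next
  case (shift F E b)
  note h = shift
  from r2 show ?thesis
  proof (cases rule: red.cases)
    case (beta G w c)
    have "F = G \<and> Reset (plug E (Shift b)) = App (Lam c) w"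
      by (rule unique_decomp) (use h beta in \<open>auto simp: redex_def\<close>)
    then show ?thesis by simp
  next
    case (shift G E' c)
    have "F = G \<and> Reset (plug E (Shift b)) = Reset (plug E' (Shift c))"
      by (rule unique_decomp) (use h shift in \<open>auto simp: redex_def\<close>)
    then have "F = G" "E = E'" "b = c" using pctx_shift_inj[of E E' b c] h shift by auto
    then show ?thesis using h shift by simp
  next
    case (reset G w)
    have "F = G \<and> Reset (plug E (Shift b)) = Reset w"
      by (rule unique_decomp) (use h reset in \<open>auto simp: redex_def\<close>)
    then show ?thesis using reset h plug_shift_not_val[of E b] by simp
  qed
next
  case (reset F v)
  note h = reset
  from r2 show ?thesis
  proof (cases rule: red.cases)
    case (beta G w c)
    have "F = G \<and> Reset v = App (Lam c) w"
      by (rule unique_decomp) (use h beta in \<open>auto simp: redex_def\<close>)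
    then show ?thesis by simp
  next
    case (shift G E c)
    have "F = G \<and> Reset v = Reset (plug E (Shift c))"
      by (rule unique_decomp) (use h shift in \<open>auto simp: redex_def\<close>)
    then show ?thesis using shift h plug_shift_not_val[of E c] by simp
  next
    case (reset G w)
    have "F = G \<and> Reset v = Reset w"
      by (rule unique_decomp) (use h reset in \<open>auto simp: redex_def\<close>)
    then show ?thesis using h reset by simp
  qed
qed

lemma red_ctx: "red a b \<Longrightarrow> is_fctx F \<Longrightarrow> red (plug F a) (plug F b)"
proof (induction rule: red.induct)
  case (beta G v t)
  then show ?case using red.beta[of "ccomp F G" v t] by simp
next
  case (shift G E t)
  then show ?case using red.shift[of "ccomp F G" E t] by simp
next
  case (reset G v)
  then show ?case using red.reset[of "ccomp F G" v] by simp
qed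

lemma reds_ctx: "reds a b \<Longrightarrow> is_fctx F \<Longrightarrow> reds (plug F a) (plug F b)"
  by (induction rule: rtranclp_induct) (auto intro: rtranclp.rtrancl_into_rtrancl red_ctx)

lemma val_irred: "is_val v \<Longrightarrow> irreducible v"
  unfolding irreducible_def
proof
  assume v: "is_val v" and "\<exists>u. red v u"
  then obtain u where "red v u" by blast
  then obtain F r where F: "is_fctx F" "redex r" "v = plug F r" using red_redex by blast
  then have "F = Hole" using v plug_val by blast
  then show False using F v redex_not_val by simp
qed

lemma red_plug_redex: "is_fctx F \<Longrightarrow> redex r \<Longrightarrow> \<exists>u. red (plug F r) u"
  unfolding redex_def by (auto intro: red.intros)

lemma shift_stuck: "is_pctx E \<Longrightarrow> stuck (plug E (Shift t))"
  unfolding stuck_def irreducible_def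
proof (intro conjI notI)
  assume "is_pctx E" "is_val (plug E (Shift t))" then show False using plug_shift_not_val by blast
next
  assume E: "is_pctx E" and "\<exists>u. red (plug E (Shift t)) u"
  then obtain u where "red (plug E (Shift t)) u" by blast
  then obtain F r where F: "is_fctx F" "redex r" "plug E (Shift t) = plug F r" using red_redex by blast
  then show False using shift_no_redex[OF E] by blast
qed

lemma closed_stuck: "closedn 0 t \<Longrightarrow> irreducible t \<Longrightarrow> \<not> is_val t \<Longrightarrow> \<exists>E s. is_pctx E \<and> t = plug E (Shift s)"
proof (induction t)
  case (App a b)
  have ia: "irreducible a"
    using App.prems(2) red_ctx[of a _ "CAppL Hole b"] unfolding irreducible_def by auto
  show ?case
  proof (cases "is_val a")
    case True
    have ib: "irreducible b"
      using App.prems(2) red_ctx[of b _ "CAppR a Hole"] True unfolding irreducible_def by auto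
    show ?thesis
    proof (cases "is_val b")
      case True
      then have "redex (App a b)" using \<open>is_val a\<close> by (auto simp: redex_def is_val_iff)
      then show ?thesis using red_plug_redex[of Hole] App.prems(2) unfolding irreducible_def by auto
    next
      case False
      then obtain E s where "is_pctx E" "b = plug E (Shift s)" using App ib by auto
      then show ?thesis using \<open>is_val a\<close> by (intro exI[of _ "CAppR a E"]) auto
    qed
  next
    case False
    then obtain E s where "is_pctx E" "a = plug E (Shift s)" using App ia by auto
    then show ?thesis by (intro exI[of _ "CAppL E b"]) auto
  qed
next
  case (Shift t)
  then show ?case by (intro exI[of _ Hole]) auto
next
  case (Reset a)
  have ia: "irreducible a"
    using Reset.prems(2) red_ctx[of a _ "CReset Hole"] unfolding irreducible_def by auto
  show ?case
  proof (cases "is_val a")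
    case True
    then have "redex (Reset a)" by (auto simp: redex_def)
    then show ?thesis using red_plug_redex[of Hole] Reset.prems(2) unfolding irreducible_def by auto
  next
    case False
    then obtain E s where "is_pctx E" "a = plug E (Shift s)" using Reset ia by auto
    then have "redex (Reset a)" by (auto simp: redex_def)
    then show ?thesis using red_plug_redex[of Hole] Reset.prems(2) unfolding irreducible_def by auto
  qed
qed auto

lemma closed_nf: "closedn 0 t \<Longrightarrow> irreducible t \<Longrightarrow> is_val t \<or> stuck t"
  unfolding stuck_def by auto

lemma red_closed: "red t u \<Longrightarrow> closedn 0 t \<Longrightarrow> closedn 0 u"
proof (induction rule: red.induct)
  case (beta F v t)
  then have "ccl 0 F" "closedn (Suc 0) t" "closedn 0 v" using closedn_plug[of F 0] by auto
  then show ?case using closedn_plug[of F 0] beta.hyps closedn_subst[of 0 t v 0] by auto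
next
  case (shift F E t)
  have fE: "is_fctx E" using shift.hyps pctx_fctx by blast
  have "ccl 0 F" "closedn 0 (Reset (plug E (Shift t)))" using closedn_plug[of F 0] shift by auto
  then have "ccl 0 E" "closedn (Suc 0) t" using closedn_plug[OF fE, of 0] by auto
  then have "closedn 0 (cont E)" using closed_cont shift.hyps by blast
  then have "closedn 0 (subst0 (cont E) t)" using closedn_subst[of 0 t "cont E" 0] \<open>closedn (Suc 0) t\<close> by auto
  then show ?case using closedn_plug[of F 0] \<open>ccl 0 F\<close> shift.hyps by auto
next
  case (reset F v)
  then show ?case using closedn_plug[of F 0] by auto
qed

lemma reds_closed: "reds t u \<Longrightarrow> closedn 0 t \<Longrightarrow> closedn 0 u"
  by (induction rule: rtranclp_induct) (auto intro: red_closed)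




section \<open>Counted closure\<close>

inductive tk :: "rel \<Rightarrow> nat \<Rightarrow> trm \<Rightarrow> trm \<Rightarrow> bool" for Q where
  tk_base: "(s,t) \<in> Q \<Longrightarrow> tk Q (Suc 0) s t"
| tk_var: "tk Q 0 (Var i) (Var i)"
| tk_lam: "tk Q k s t \<Longrightarrow> tk Q k (Lam s) (Lam t)"
| tk_shift: "tk Q k s t \<Longrightarrow> tk Q k (Shift s) (Shift t)"
| tk_reset: "tk Q k s t \<Longrightarrow> tk Q k (Reset s) (Reset t)"
| tk_app: "tk Q k s t \<Longrightarrow> tk Q k' s' t' \<Longrightarrow> tk Q (k+k') (App s s') (App t t')"

lemma tk_AppE: assumes "tk Q k (App s s') q"
  obtains "(App s s', q) \<in> Q" "k = Suc 0"
  | k1 t k2 t' where "q = App t t'" "tk Q k1 s t" "tk Q k2 s' t'" "k = k1 + k2"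
  using assms by (cases rule: tk.cases) auto

lemma tk_LamE: assumes "tk Q k (Lam s) q"
  obtains "(Lam s, q) \<in> Q" "k = Suc 0"
  | t where "q = Lam t" "tk Q k s t"
  using assms by (cases rule: tk.cases) auto

lemma tk_ShiftE: assumes "tk Q k (Shift s) q"
  obtains "(Shift s, q) \<in> Q" "k = Suc 0"
  | t where "q = Shift t" "tk Q k s t"
  using assms by (cases rule: tk.cases) auto

lemma tk_ResetE: assumes "tk Q k (Reset s) q"
  obtains "(Reset s, q) \<in> Q" "k = Suc 0"
  | t where "q = Reset t" "tk Q k s t"
  using assms by (cases rule: tk.cases) auto

lemma tclos_tk: "tclos Q s t \<longleftrightarrow> (\<exists>k. tk Q k s t)"
proof
  show "tclos Q s t \<Longrightarrow> \<exists>k. tk Q k s t"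
    by (induction rule: tclos.induct) (auto intro: tk.intros)
  show "\<exists>k. tk Q k s t \<Longrightarrow> tclos Q s t"
  proof (elim exE)
    fix k assume "tk Q k s t" then show "tclos Q s t"
      by (induction rule: tk.induct) (auto intro: tclos.intros)
  qed
qed

lemma tk_refl: "tk Q 0 t t"
proof (induction t)
  case (App t1 t2) then show ?case using tk_app[of Q 0 t1 t1 0 t2 t2] by simp
qed (auto intro: tk.intros)

lemma tk_mono: "tk Q k s t \<Longrightarrow> Q \<subseteq> Q' \<Longrightarrow> tk Q' k s t"
  by (induction rule: tk.induct) (auto intro: tk.intros)

lemma tk_conv: "tk Q k s t \<Longrightarrow> tk (converse Q) k t s"
  by (induction rule: tk.induct) (auto intro: tk.intros)

lemma tk_empty: "tk {} k s t \<Longrightarrow> s = t"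
  by (induction rule: tk.induct) auto

inductive ctxk :: "rel \<Rightarrow> nat \<Rightarrow> ctx \<Rightarrow> ctx \<Rightarrow> bool" for Q where
  ck_hole: "ctxk Q 0 Hole Hole"
| ck_appR: "tk Q j v v1 \<Longrightarrow> is_val v1 \<Longrightarrow> ctxk Q k F F1 \<Longrightarrow> ctxk Q (j+k) (CAppR v F) (CAppR v1 F1)"
| ck_appL: "tk Q j s s1 \<Longrightarrow> ctxk Q k F F1 \<Longrightarrow> ctxk Q (j+k) (CAppL F s) (CAppL F1 s1)"
| ck_reset: "ctxk Q k F F1 \<Longrightarrow> ctxk Q k (CReset F) (CReset F1)"

lemma ctxk_plug: "ctxk Q k F F1 \<Longrightarrow> tk Q j x x1 \<Longrightarrow> tk Q (k+j) (plug F x) (plug F1 x1)"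
proof (induction arbitrary: j rule: ctxk.induct)
  case (ck_appR j' v v1 k F F1)
  then show ?case using tk_app[of Q j' v v1 "k+j"] by (simp add: add.assoc)
next
  case (ck_appL j' s s1 k F F1)
  then show ?case using tk_app[of Q "k+j" _ _ j' s s1] by (simp add: add.commute add.left_commute)
qed (auto intro: tk.intros)

lemma ctxk_fctx: "ctxk Q k F F1 \<Longrightarrow> is_fctx F \<Longrightarrow> is_fctx F1"
  by (induction rule: ctxk.induct) auto

lemma ctxk_pctx: "ctxk Q k F F1 \<Longrightarrow> is_pctx F \<Longrightarrow> is_pctx F1"
  by (induction rule: ctxk.induct) auto

lemma ctxk_comp: "ctxk Q k A A1 \<Longrightarrow> ctxk Q j B B1 \<Longrightarrow> ctxk Q (k+j) (ccomp A B) (ccomp A1 B1)"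
proof (induction arbitrary: j rule: ctxk.induct)
  case (ck_appR j' v v1 k F F1)
  then show ?case using ctxk.ck_appR[of Q j' v v1 "k+j"] by (simp add: add.assoc)
next
  case (ck_appL j' s s1 k F F1)
  then show ?case using ctxk.ck_appL[of Q j' s s1 "k+j"] by (simp add: add.assoc)
qed (auto intro: ctxk.intros)

lemma ctxk_refl: "is_fctx F \<Longrightarrow> ctxk Q 0 F F"
proof (induction F)
  case (CAppR v F) then show ?case using ck_appR[of Q 0 v v 0 F F] tk_refl by simp
next
  case (CAppL F s) then show ?case using ck_appL[of Q 0 s s 0 F F] tk_refl by simp
qed (auto intro: ctxk.intros)

lemma ctxk_mono: "ctxk Q k F F1 \<Longrightarrow> Q \<subseteq> Q' \<Longrightarrow> ctxk Q' k F F1"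
  by (induction rule: ctxk.induct) (auto intro: ctxk.intros tk_mono)

lemma ctxk_conv: "ctxk Q k F F1 \<Longrightarrow> is_fctx F \<Longrightarrow> ctxk (converse Q) k F1 F"
  by (induction rule: ctxk.induct) (auto intro: ctxk.intros tk_conv)

definition Qcl :: "rel \<Rightarrow> bool" where
  "Qcl Q \<longleftrightarrow> (\<forall>(a,b)\<in>Q. closedn 0 a \<and> closedn 0 b)"

lemma tk_lift: "tk Q k u u1 \<Longrightarrow> Qcl Q \<Longrightarrow> tk Q k (lift n u) (lift n u1)"
proof (induction arbitrary: n rule: tk.induct)
  case (tk_base s t)
  then have "lift n s = s" "lift n t = t" unfolding Qcl_def using lift_closed[of 0] by auto
  then show ?case using tk_base by (auto intro: tk.intros)
next
  case (tk_var i) then show ?case by (auto intro: tk.intros)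
qed (auto intro: tk.intros)

lemma tk_subst: "tk Q k t t1 \<Longrightarrow> Qcl Q \<Longrightarrow> tk Q j u u1 \<Longrightarrow> \<exists>k'. tk Q k' (subst n u t) (subst n u1 t1)"
proof (induction arbitrary: n u u1 j rule: tk.induct)
  case (tk_base s t)
  then have "subst n u s = s" "subst n u1 t = t" unfolding Qcl_def using subst_closed[of 0] by auto
  then show ?case using tk_base by (auto intro: tk.intros)
next
  case (tk_var i) then show ?case using tk_refl by (auto intro: tk.intros)
next
  case (tk_lam k s t)
  then obtain k' where "tk Q k' (subst (Suc n) (lift 0 u) s) (subst (Suc n) (lift 0 u1) t)"
    using tk_lift by blast
  then show ?case by (auto intro: tk.intros)
next
  case (tk_shift k s t)
  then obtain k' where "tk Q k' (subst (Suc n) (lift 0 u) s) (subst (Suc n) (lift 0 u1) t)"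
    using tk_lift by blast
  then show ?case by (auto intro: tk.intros)
next
  case (tk_reset k s t)
  then obtain k' where "tk Q k' (subst n u s) (subst n u1 t)" by blast
  then show ?case by (auto intro: tk.intros)
next
  case (tk_app k s t k2 s' t')
  then obtain a b where "tk Q a (subst n u s) (subst n u1 t)" "tk Q b (subst n u s') (subst n u1 t')" by blast
  then show ?case by (auto intro: tk.intros)
qed

lemma tk_cont: "ctxk Q k E E1 \<Longrightarrow> is_pctx E \<Longrightarrow> ccl 0 E \<Longrightarrow> ccl 0 E1 \<Longrightarrow> tk Q k (cont E) (cont E1)"
proof -
  assume a: "ctxk Q k E E1" "is_pctx E" "ccl 0 E" "ccl 0 E1"
  then have "is_pctx E1" using ctxk_pctx by blast
  have "tk Q (k+0) (plug E (Var 0)) (plug E1 (Var 0))" using ctxk_plug[OF a(1) tk_var] .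
  then show ?thesis using a \<open>is_pctx E1\<close> by (simp add: cont_closed tk.intros)
qed

lemma rhat_of: "ctxk Q k F F1 \<Longrightarrow> is_fctx F \<Longrightarrow> ccl 0 F \<Longrightarrow> ccl 0 F1 \<Longrightarrow> rhat Q F F1"
proof (induction rule: ctxk.induct)
  case (ck_appR j v v1 k F F1)
  then show ?case by (auto intro!: rhat.intros simp: rtilde_def closed_def tclos_tk)
next
  case (ck_appL j s s1 k F F1)
  then show ?case by (auto intro!: rhat.intros simp: rtilde_def closed_def tclos_tk)
qed (auto intro: rhat.intros)

section \<open>Decomposition\<close>

lemma DK:
  assumes "tk Q k (plug F x) q" "is_fctx F"
  shows "(\<exists>Fa Fb F1 q1 j. F = ccomp Fa Fb \<and> (plug Fb x, q1) \<in> Q \<and> q = plug F1 q1 \<and> ctxk Q j Fa F1 \<and> j < k) \<or>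
         (\<exists>G0 G1 j v v1. (v, v1) \<in> Q \<and> \<not> is_val v1 \<and> is_val v \<and> plug F x = plug G0 v \<and> q = plug G1 v1 \<and> is_fctx G0 \<and> ctxk Q j G0 G1 \<and> j < k) \<or>
         (\<exists>F1 x1 j1 j2. q = plug F1 x1 \<and> ctxk Q j1 F F1 \<and> tk Q j2 x x1 \<and> j1 + j2 = k)"
  using assms
proof (induction F arbitrary: k q)
  case Hole
  then show ?case using ck_hole by fastforce
next
  case (CAppR v F)
  have vv: "is_val v" and fF: "is_fctx F" using CAppR.prems by auto
  from CAppR.prems(1) have "tk Q k (App v (plug F x)) q" by simp
  then show ?case
  proof (cases rule: tk_AppE)
    case 1
    from 1 have "CAppR v F = ccomp Hole (CAppR v F)" "(plug (CAppR v F) x, q) \<in> Q" "q = plug Hole q"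
       "ctxk Q 0 Hole Hole" "0 < k" by (auto intro: ck_hole)
    then show ?thesis by blast
  next
    case (2 k1 v1 k2 q')
    note tk_app = 2
    show ?thesis
    proof (cases "is_val v1")
      case True
      from CAppR.IH[OF tk_app(3) fF] show ?thesis
      proof (elim disjE exE conjE)
        fix Fa Fb F1 q1 j assume h: "F = ccomp Fa Fb" "(plug Fb x, q1) \<in> Q" "q' = plug F1 q1" "ctxk Q j Fa F1" "j < k2"
        have "CAppR v F = ccomp (CAppR v Fa) Fb" "q = plug (CAppR v1 F1) q1"
          "ctxk Q (k1+j) (CAppR v Fa) (CAppR v1 F1)" "k1 + j < k"
          using h tk_app True by (auto intro: ck_appR)
        then show ?thesis using h(2) by blast
      next
        fix G0 G1 j w w1 assume h: "(w, w1) \<in> Q" "\<not> is_val w1" "is_val w" "plug F x = plug G0 w" "q' = plug G1 w1"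
          "is_fctx G0" "ctxk Q j G0 G1" "j < k2"
        have "plug (CAppR v F) x = plug (CAppR v G0) w" "q = plug (CAppR v1 G1) w1" "is_fctx (CAppR v G0)"
          "ctxk Q (k1+j) (CAppR v G0) (CAppR v1 G1)" "k1 + j < k"
          using h tk_app True vv by (auto intro: ck_appR)
        then show ?thesis using h(1-3) by blast
      next
        fix F1 x1 j1 j2 assume h: "q' = plug F1 x1" "ctxk Q j1 F F1" "tk Q j2 x x1" "j1 + j2 = k2"
        have "q = plug (CAppR v1 F1) x1" "ctxk Q (k1+j1) (CAppR v F) (CAppR v1 F1)" "(k1 + j1) + j2 = k"
          using h tk_app True by (auto intro: ck_appR)
        then show ?thesis using h(3) by blast
      qed
    next
      case False
      obtain b where vb: "v = Lam b" using vv is_val_iff by blast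
      from tk_app(2) have "(v, v1) \<in> Q \<and> k1 = 1"
        unfolding vb by (cases rule: tk_LamE) (use False in auto)
      moreover have "ctxk Q (k2 + 0) (CAppL Hole (plug F x)) (CAppL Hole q')"
        using tk_app(3) by (intro ck_appL ck_hole)
      moreover have "plug (CAppR v F) x = plug (CAppL Hole (plug F x)) v" "q = plug (CAppL Hole q') v1"
        "is_fctx (CAppL Hole (plug F x))" using tk_app by auto
      ultimately show ?thesis using False vv tk_app by (rule_tac disjI2, rule_tac disjI1) force
    qed
  qed
next
  case (CAppL F s)
  have fF: "is_fctx F" using CAppL.prems by auto
  from CAppL.prems(1) have "tk Q k (App (plug F x) s) q" by simp
  then show ?case
  proof (cases rule: tk_AppE)
    case 1
    from 1 have "CAppL F s = ccomp Hole (CAppL F s)" "(plug (CAppL F s) x, q) \<in> Q" "q = plug Hole q"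
       "ctxk Q 0 Hole Hole" "0 < k" by (auto intro: ck_hole)
    then show ?thesis by blast
  next
    case (2 k1 q' k2 s')
    note tk_app = 2
    from CAppL.IH[OF tk_app(2) fF] show ?thesis
    proof (elim disjE exE conjE)
      fix Fa Fb F1 q1 j assume h: "F = ccomp Fa Fb" "(plug Fb x, q1) \<in> Q" "q' = plug F1 q1" "ctxk Q j Fa F1" "j < k1"
      have "CAppL F s = ccomp (CAppL Fa s) Fb" "q = plug (CAppL F1 s') q1"
        "ctxk Q (k2+j) (CAppL Fa s) (CAppL F1 s')" "k2 + j < k"
        using h tk_app by (auto intro: ck_appL)
      then show ?thesis using h(2) by blast
    next
      fix G0 G1 j w w1 assume h: "(w, w1) \<in> Q" "\<not> is_val w1" "is_val w" "plug F x = plug G0 w" "q' = plug G1 w1"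
        "is_fctx G0" "ctxk Q j G0 G1" "j < k1"
      have "plug (CAppL F s) x = plug (CAppL G0 s) w" "q = plug (CAppL G1 s') w1" "is_fctx (CAppL G0 s)"
        "ctxk Q (k2+j) (CAppL G0 s) (CAppL G1 s')" "k2 + j < k"
        using h tk_app by (auto intro: ck_appL)
      then show ?thesis using h(1-3) by blast
    next
      fix F1 x1 j1 j2 assume h: "q' = plug F1 x1" "ctxk Q j1 F F1" "tk Q j2 x x1" "j1 + j2 = k1"
      have "q = plug (CAppL F1 s') x1" "ctxk Q (k2+j1) (CAppL F s) (CAppL F1 s')" "(k2 + j1) + j2 = k"
        using h tk_app by (auto intro: ck_appL)
      then show ?thesis using h(3) by blast
    qed
  qed
next
  case (CReset F)
  have fF: "is_fctx F" using CReset.prems by auto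
  from CReset.prems(1) have "tk Q k (Reset (plug F x)) q" by simp
  then show ?case
  proof (cases rule: tk_ResetE)
    case 1
    from 1 have "CReset F = ccomp Hole (CReset F)" "(plug (CReset F) x, q) \<in> Q" "q = plug Hole q"
       "ctxk Q 0 Hole Hole" "0 < k" by (auto intro: ck_hole)
    then show ?thesis by blast
  next
    case (2 q')
    note tk_reset = 2
    from CReset.IH[OF tk_reset(2) fF] show ?thesis
    proof (elim disjE exE conjE)
      fix Fa Fb F1 q1 j assume h: "F = ccomp Fa Fb" "(plug Fb x, q1) \<in> Q" "q' = plug F1 q1" "ctxk Q j Fa F1" "j < k"
      have "CReset F = ccomp (CReset Fa) Fb" "q = plug (CReset F1) q1"
        "ctxk Q j (CReset Fa) (CReset F1)"
        using h tk_reset by (auto intro: ck_reset)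
      then show ?thesis using h(2,5) by blast
    next
      fix G0 G1 j w w1 assume h: "(w, w1) \<in> Q" "\<not> is_val w1" "is_val w" "plug F x = plug G0 w" "q' = plug G1 w1"
        "is_fctx G0" "ctxk Q j G0 G1" "j < k"
      have "plug (CReset F) x = plug (CReset G0) w" "q = plug (CReset G1) w1" "is_fctx (CReset G0)"
        "ctxk Q j (CReset G0) (CReset G1)"
        using h tk_reset by (auto intro: ck_reset)
      then show ?thesis using h(1-3,8) by blast
    next
      fix F1 x1 j1 j2 assume h: "q' = plug F1 x1" "ctxk Q j1 F F1" "tk Q j2 x x1" "j1 + j2 = k"
      have "q = plug (CReset F1) x1" "ctxk Q j1 (CReset F) (CReset F1)"
        using h tk_reset by (auto intro: ck_reset)
      then show ?thesis using h(3,4) by blast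
    qed
  qed
qed auto




section \<open>Facts about bisimulations\<close>

lemma env_pair: "is_env E \<Longrightarrow> (a,b) \<in> E \<Longrightarrow> closedn 0 a \<and> closedn 0 b \<and> ((is_val a \<and> is_val b) \<or> (stuck a \<and> stuck b))"
  unfolding is_env_def closed_def by auto

lemma env_Qcl: "is_env E \<Longrightarrow> Qcl E"
  unfolding Qcl_def by (auto dest: env_pair)

lemma env_irred: "is_env E \<Longrightarrow> (a,b) \<in> E \<Longrightarrow> irreducible a \<and> irreducible b"
  using env_pair val_irred unfolding stuck_def by blast

lemma env_val: "is_env E \<Longrightarrow> (a,b) \<in> E \<Longrightarrow> is_val a \<Longrightarrow> is_val b"
  using env_pair unfolding stuck_def by blast

lemma env_stuck: "is_env E \<Longrightarrow> (a,b) \<in> E \<Longrightarrow> \<not> is_val a \<Longrightarrow> stuck b"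
  using env_pair by blast

lemma comp_Hole[simp]: "ccomp F Hole = F"
  by (induction F) auto

lemma redex_reducible: "is_fctx F \<Longrightarrow> redex r \<Longrightarrow> \<not> irreducible (plug F r)"
  using red_plug_redex unfolding irreducible_def by blast

context
  fixes Es Ts
  assumes B: "env_bisim Es Ts"
begin

lemma B_p1:
  "env_rel Es Ts"
  using B unfolding env_bisim_def by (elim conjE) assumption

lemma B_p2:
  "\<forall>E t0 t1. (E, t0, t1) \<in> Ts \<longrightarrow>
       (\<forall>t0'. red t0 t0' \<longrightarrow> (\<exists>t1'. reds t1 t1' \<and> (E, t0', t1') \<in> Ts)) \<and>
       (is_val t0 \<longrightarrow> (\<exists>v1. reds t1 v1 \<and> is_val v1 \<and> insert (t0, v1) E \<in> Es)) \<and>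
       (stuck t0 \<longrightarrow> (\<exists>t1'. reds t1 t1' \<and> stuck t1' \<and> insert (t0, t1') E \<in> Es)) \<and>
       (\<forall>t1'. red t1 t1' \<longrightarrow> (\<exists>t0'. reds t0 t0' \<and> (E, t0', t1') \<in> Ts)) \<and>
       (is_val t1 \<longrightarrow> (\<exists>v0. reds t0 v0 \<and> is_val v0 \<and> insert (v0, t1) E \<in> Es)) \<and>
       (stuck t1 \<longrightarrow> (\<exists>t0'. reds t0 t0' \<and> stuck t0' \<and> insert (t0', t1) E \<in> Es))"
  using B unfolding env_bisim_def by (elim conjE) assumption

lemma B_p3:
  "\<forall>E \<in> Es.
       (\<forall>s0 s1 v0 v1. (Lam s0, Lam s1) \<in> E \<longrightarrow> is_val v0 \<longrightarrow> is_val v1 \<longrightarrow>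
           rtilde E v0 v1 \<longrightarrow> (E, subst0 v0 s0, subst0 v1 s1) \<in> Ts) \<and>
       (\<forall>E0 E1 s0 s1 E0' E1'. is_pctx E0 \<longrightarrow> is_pctx E1 \<longrightarrow>
           (plug E0 (Shift s0), plug E1 (Shift s1)) \<in> E \<longrightarrow>
           is_pctx E0' \<longrightarrow> is_pctx E1' \<longrightarrow> rhat E E0' E1' \<longrightarrow>
           (E, Reset (subst0 (cont2 E0' E0) s0), Reset (subst0 (cont2 E1' E1) s1)) \<in> Ts)"
  using B unfolding env_bisim_def by (elim conjE) assumption

lemma B_env: "E \<in> Es \<Longrightarrow> is_env E"
  using B_p1 unfolding env_rel_def by blast

lemma B_trip: "(E,a,b) \<in> Ts \<Longrightarrow> is_env E \<and> closedn 0 a \<and> closedn 0 b"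
  using B_p1 unfolding env_rel_def closed_def by blast

lemma B_T: "(E,a,b) \<in> Ts \<Longrightarrow>
       (\<forall>t0'. red a t0' \<longrightarrow> (\<exists>t1'. reds b t1' \<and> (E, t0', t1') \<in> Ts)) \<and>
       (is_val a \<longrightarrow> (\<exists>v1. reds b v1 \<and> is_val v1 \<and> insert (a, v1) E \<in> Es)) \<and>
       (stuck a \<longrightarrow> (\<exists>t1'. reds b t1' \<and> stuck t1' \<and> insert (a, t1') E \<in> Es)) \<and>
       (\<forall>t1'. red b t1' \<longrightarrow> (\<exists>t0'. reds a t0' \<and> (E, t0', t1') \<in> Ts)) \<and>
       (is_val b \<longrightarrow> (\<exists>v0. reds a v0 \<and> is_val v0 \<and> insert (v0, b) E \<in> Es)) \<and>
       (stuck b \<longrightarrow> (\<exists>t0'. reds a t0' \<and> stuck t0' \<and> insert (t0', b) E \<in> Es))"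
  by (rule B_p2[rule_format])

lemma B_step: "(E,a,b) \<in> Ts \<Longrightarrow> red a a' \<Longrightarrow> \<exists>b'. reds b b' \<and> (E,a',b') \<in> Ts"
  using B_T by blast

lemma B_val: "(E,a,b) \<in> Ts \<Longrightarrow> is_val a \<Longrightarrow> \<exists>v. reds b v \<and> is_val v \<and> insert (a,v) E \<in> Es"
  using B_T by blast

lemma B_stuck: "(E,a,b) \<in> Ts \<Longrightarrow> stuck a \<Longrightarrow> \<exists>v. reds b v \<and> stuck v \<and> insert (a,v) E \<in> Es"
  using B_T by blast

lemma B_E: "E \<in> Es \<Longrightarrow> (\<forall>s0 s1 v0 v1. (Lam s0, Lam s1) \<in> E \<longrightarrow> is_val v0 \<longrightarrow> is_val v1 \<longrightarrow>
           rtilde E v0 v1 \<longrightarrow> (E, subst0 v0 s0, subst0 v1 s1) \<in> Ts) \<and>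
       (\<forall>E0 E1 s0 s1 E0' E1'. is_pctx E0 \<longrightarrow> is_pctx E1 \<longrightarrow>
           (plug E0 (Shift s0), plug E1 (Shift s1)) \<in> E \<longrightarrow>
           is_pctx E0' \<longrightarrow> is_pctx E1' \<longrightarrow> rhat E E0' E1' \<longrightarrow>
           (E, Reset (subst0 (cont2 E0' E0) s0), Reset (subst0 (cont2 E1' E1) s1)) \<in> Ts)"
  by (rule B_p3[rule_format])

lemma B_lam: "E \<in> Es \<Longrightarrow> (Lam s0, Lam s1) \<in> E \<Longrightarrow> is_val v0 \<Longrightarrow> is_val v1 \<Longrightarrow> rtilde E v0 v1
   \<Longrightarrow> (E, subst0 v0 s0, subst0 v1 s1) \<in> Ts"
  using B_E by blast

lemma B_shift: "E \<in> Es \<Longrightarrow> is_pctx E0 \<Longrightarrow> is_pctx E1 \<Longrightarrow> (plug E0 (Shift s0), plug E1 (Shift s1)) \<in> E \<Longrightarrow>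
   is_pctx E0' \<Longrightarrow> is_pctx E1' \<Longrightarrow> rhat E E0' E1' \<Longrightarrow>
   (E, Reset (subst0 (cont2 E0' E0) s0), Reset (subst0 (cont2 E1' E1) s1)) \<in> Ts"
  using B_E by blast

definition Srel :: "trm \<Rightarrow> trm \<Rightarrow> bool" where
  "Srel p0 p1 \<longleftrightarrow> closedn 0 p0 \<and> closedn 0 p1 \<and>
    ((\<exists>E k. E \<in> Es \<and> tk E k p0 p1) \<or>
     (\<exists>E F0 F1 a0 a1 j. (E,a0,a1) \<in> Ts \<and> is_fctx F0 \<and> ctxk E j F0 F1 \<and> p0 = plug F0 a0 \<and> p1 = plug F1 a1))"

lemma shift_base_case:
  assumes E: "E \<in> Es" and fF: "is_fctx F" and cF: "ctxk E j1 F F1"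
    and Ea: "is_pctx Ea" and Eb: "is_pctx Eb" and cE: "ctxk E j Ea E1a"
    and inE: "(plug Eb (Shift b), c) \<in> E"
    and p0: "p0 = plug F (Reset (plug Ea (plug Eb (Shift b))))"
    and p1: "p1 = plug F1 (Reset (plug E1a c))"
    and cl0: "closedn 0 p0" and cl1: "closedn 0 p1"
  shows "\<exists>p1'. reds p1 p1' \<and> Srel (plug F (Reset (subst0 (cont (ccomp Ea Eb)) b))) p1'"
proof -
  have env: "is_env E" using B_env E .
  have fF1: "is_fctx F1" using ctxk_fctx cF fF by blast
  have pE1a: "is_pctx E1a" using ctxk_pctx cE Ea by blast
  have fEa: "is_fctx Ea" "is_fctx E1a" "is_fctx Eb" using Ea pE1a Eb pctx_fctx by auto
  have "stuck (plug Eb (Shift b))" using shift_stuck Eb by blast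
  then have "stuck c" using env_stuck[OF env inE] unfolding stuck_def by blast
  moreover have "closedn 0 c" using env_pair[OF env inE] by blast
  ultimately obtain Ec b1 where Ec: "is_pctx Ec" "c = plug Ec (Shift b1)"
    using closed_stuck unfolding stuck_def by blast
  have cl: "ccl 0 F" "ccl 0 F1" "ccl 0 Ea" "ccl 0 E1a"
    using cl0 cl1 p0 p1 fF fF1 fEa by (auto simp: closedn_plug)
  have rh: "rhat E Ea E1a" using rhat_of[OF cE fEa(1) cl(3) cl(4)] .
  have T: "(E, Reset (subst0 (cont2 Ea Eb) b), Reset (subst0 (cont2 E1a Ec) b1)) \<in> Ts"
    using B_shift[OF E Eb Ec(1) _ Ea pE1a rh] inE Ec by simp
  have "red p1 (plug F1 (Reset (subst0 (cont (ccomp E1a Ec)) b1)))"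
    using red.shift[OF fF1, of "ccomp E1a Ec" b1] p1 Ec pE1a by simp
  moreover have "cont (ccomp E1a Ec) = cont2 E1a Ec" "cont (ccomp Ea Eb) = cont2 Ea Eb"
    using cont_comp fEa by auto
  moreover have "closedn 0 (plug F (Reset (subst0 (cont (ccomp Ea Eb)) b)))"
    using red_closed[OF red.shift[OF fF, of "ccomp Ea Eb" b]] cl0 p0 Ea Eb by simp
  moreover have "closedn 0 (plug F1 (Reset (subst0 (cont (ccomp E1a Ec)) b1)))"
    using red_closed[OF red.shift[OF fF1, of "ccomp E1a Ec" b1]] cl1 p1 Ec pE1a by simp
  ultimately show ?thesis unfolding Srel_def using T fF cF
    by (intro exI[of _ "plug F1 (Reset (subst0 (cont (ccomp E1a Ec)) b1))"]) fastforce
qed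

lemma S_tc_step:
  assumes E: "E \<in> Es" and tk: "tk E k p0 p1" and cl0: "closedn 0 p0" and cl1: "closedn 0 p1"
    and r: "red p0 p0'"
  shows "\<exists>p1'. reds p1 p1' \<and> Srel p0' p1'"
proof -
  have env: "is_env E" using B_env E .
  have QE: "Qcl E" using env_Qcl env .
  have cl0': "closedn 0 p0'" using red_closed r cl0 by blast
  have nopath: "\<And>F x Fa Fb q1 j. is_fctx F \<Longrightarrow> redex x \<Longrightarrow> F = ccomp Fa Fb \<Longrightarrow> (plug Fb x, q1) \<in> E \<Longrightarrow> False"
  proof -
    fix F x Fa Fb q1 j assume "is_fctx F" "redex x" "F = ccomp Fa Fb" "(plug Fb x, q1) \<in> E"
    then show False using env_irred[OF env] redex_reducible[of Fb x] by auto
  qed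
  have noside: "\<And>w w1. (w, w1) \<in> E \<Longrightarrow> \<not> is_val w1 \<Longrightarrow> is_val w \<Longrightarrow> False"
    using env_val[OF env] by blast
  have valrel: "\<And>j v z. tk E j v z \<Longrightarrow> is_val v \<Longrightarrow> is_val z"
  proof -
    fix j v z assume "tk E j v z" "is_val v"
    then obtain b where "v = Lam b" using is_val_iff by blast
    with \<open>tk E j v z\<close> have "tk E j (Lam b) z" by simp
    then show "is_val z"
      by (cases rule: tk_LamE) (use env_val[OF env] \<open>is_val v\<close> \<open>v = Lam b\<close> in auto)
  qed
  from r show ?thesis
  proof cases
    case (beta F v b)
    note h = beta
    have rx: "redex (App (Lam b) v)" using h by (auto simp: redex_def)
    from DK[OF tk[unfolded h(1)] h(3)] show ?thesis
    proof (elim disjE exE conjE)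
      fix Fa Fb F1 q1 j assume "F = ccomp Fa Fb" "(plug Fb (App (Lam b) v), q1) \<in> E"
      then show ?thesis using nopath h(3) rx by blast
    next
      fix G0 G1 j w w1 assume "(w, w1) \<in> E" "\<not> is_val w1" "is_val w"
      then show ?thesis using noside by blast
    next
      fix F1 x1 j1 j2 assume t: "p1 = plug F1 x1" "ctxk E j1 F F1" "tk E j2 (App (Lam b) v) x1" "j1 + j2 = k"
      have fF1: "is_fctx F1" using ctxk_fctx t(2) h(3) by blast
      have clF: "ccl 0 F" "closedn 0 (App (Lam b) v)" using cl0 h closedn_plug by auto
      have clF1: "ccl 0 F1" "closedn 0 x1" using cl1 t fF1 closedn_plug by auto
      from t(3) show ?thesis
      proof (cases rule: tk_AppE)
        case 1 then show ?thesis using env_irred[OF env] redex_reducible[of Hole] rx by auto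
      next
        case (2 c1 y c2 z)
        have zv: "is_val z" using valrel 2(3) h(4) by blast
        have clz: "closedn 0 z" "closedn 0 y" using clF1 2 by auto
        from 2(2) show ?thesis
        proof (cases rule: tk_LamE)
          case 1
          then obtain s1 where ys: "y = Lam s1" using env_val[OF env] is_val_iff by fastforce
          have rt: "rtilde E v z" unfolding rtilde_def closed_def tclos_tk using 2(3) clF clz by auto
          have T: "(E, subst0 v b, subst0 z s1) \<in> Ts" using B_lam[OF E] 1(1) ys h(4) zv rt by simp
          have st: "red p1 (plug F1 (subst0 z s1))" using red.beta[OF fF1 zv, of s1] t(1) 2(1) ys by simp
          have "Srel p0' (plug F1 (subst0 z s1))"
            unfolding Srel_def using cl0' red_closed[OF st cl1] T h(2) h(3) t(2) by blast
          then show ?thesis using st by blast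
        next
          case (2 b1)
          note l = 2
          obtain k' where k': "tk E k' (subst 0 v b) (subst 0 z b1)" using tk_subst[OF l(2) QE \<open>tk E c2 v z\<close>] by blast
          have st: "red p1 (plug F1 (subst0 z b1))" using red.beta[OF fF1 zv, of b1] t(1) \<open>x1 = App y z\<close> l(1) by simp
          have "tk E (j1 + k') p0' (plug F1 (subst0 z b1))" using ctxk_plug[OF t(2) k'] h(2) by simp
          then have "Srel p0' (plug F1 (subst0 z b1))"
            unfolding Srel_def using cl0' red_closed[OF st cl1] E by blast
          then show ?thesis using st by blast
        qed
      qed
    qed
  next
    case (reset F v)
    note h = reset
    have rx: "redex (Reset v)" using h by (auto simp: redex_def)
    from DK[OF tk[unfolded h(1)] h(3)] show ?thesis
    proof (elim disjE exE conjE)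
      fix Fa Fb F1 q1 j assume "F = ccomp Fa Fb" "(plug Fb (Reset v), q1) \<in> E"
      then show ?thesis using nopath h(3) rx by blast
    next
      fix G0 G1 j w w1 assume "(w, w1) \<in> E" "\<not> is_val w1" "is_val w"
      then show ?thesis using noside by blast
    next
      fix F1 x1 j1 j2 assume t: "p1 = plug F1 x1" "ctxk E j1 F F1" "tk E j2 (Reset v) x1" "j1 + j2 = k"
      have fF1: "is_fctx F1" using ctxk_fctx t(2) h(3) by blast
      from t(3) show ?thesis
      proof (cases rule: tk_ResetE)
        case 1 then show ?thesis using env_irred[OF env] redex_reducible[of Hole] rx by auto
      next
        case (2 y)
        have yv: "is_val y" using valrel 2(2) h(4) by blast
        have st: "red p1 (plug F1 y)" using red.reset[OF fF1 yv] t(1) 2(1) by simp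
        have "tk E (j1 + j2) p0' (plug F1 y)" using ctxk_plug[OF t(2) 2(2)] h(2) by simp
        then have "Srel p0' (plug F1 y)"
          unfolding Srel_def using cl0' red_closed[OF st cl1] E by blast
        then show ?thesis using st by blast
      qed
    qed
  next
    case (shift F E0 b)
    note h = shift
    have rx: "redex (Reset (plug E0 (Shift b)))" using h by (auto simp: redex_def)
    have fE0: "is_fctx E0" using pctx_fctx h(4) by blast
    from DK[OF tk[unfolded h(1)] h(3)] show ?thesis
    proof (elim disjE exE conjE)
      fix Fa Fb F1 q1 j assume "F = ccomp Fa Fb" "(plug Fb (Reset (plug E0 (Shift b))), q1) \<in> E"
      then show ?thesis using nopath h(3) rx by blast
    next
      fix G0 G1 j w w1 assume "(w, w1) \<in> E" "\<not> is_val w1" "is_val w"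
      then show ?thesis using noside by blast
    next
      fix F1 x1 j1 j2 assume t: "p1 = plug F1 x1" "ctxk E j1 F F1" "tk E j2 (Reset (plug E0 (Shift b))) x1" "j1 + j2 = k"
      have fF1: "is_fctx F1" using ctxk_fctx t(2) h(3) by blast
      from t(3) show ?thesis
      proof (cases rule: tk_ResetE)
        case 1 then show ?thesis using env_irred[OF env] redex_reducible[of Hole] rx by auto
      next
        case (2 y)
        note y = 2
        from DK[OF y(2) fE0] show ?thesis
        proof (elim disjE exE conjE)
          fix Ea Eb E1a c j assume d: "E0 = ccomp Ea Eb" "(plug Eb (Shift b), c) \<in> E" "y = plug E1a c" "ctxk E j Ea E1a"
          have "is_pctx Ea" "is_pctx Eb" using h(4) d(1) by auto
          then show ?thesis using shift_base_case[OF E h(3) t(2) _ _ d(4) d(2), of p0 p1] h(1,2) t(1) y(1) d cl0 cl1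
            by simp
        next
          fix G0 G1 j w w1 assume "(w, w1) \<in> E" "\<not> is_val w1" "is_val w"
          then show ?thesis using noside by blast
        next
          fix E1 z i1 i2 assume u: "y = plug E1 z" "ctxk E i1 E0 E1" "tk E i2 (Shift b) z" "i1 + i2 = j2"
          from u(3) show ?thesis
          proof (cases rule: tk_ShiftE)
            case 1
            then show ?thesis using shift_base_case[OF E h(3) t(2) h(4) _ u(2), of Hole b z p0 p1] h(1,2) t(1) y(1) u(1) cl0 cl1
              by simp
          next
            case (2 b1)
            have pE1: "is_pctx E1" using ctxk_pctx u(2) h(4) by blast
            have st: "red p1 (plug F1 (Reset (subst0 (cont E1) b1)))"
              using red.shift[OF fF1 pE1, of b1] t(1) y(1) u(1) 2(1) by simp
            have clE: "ccl 0 E0" using cl0 h(1,3) fE0 closedn_plug by auto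
            have clE1: "ccl 0 E1" using cl1 t(1) y(1) u(1) fF1 pctx_fctx[OF pE1] closedn_plug by auto
            have tc: "tk E i1 (cont E0) (cont E1)" using tk_cont[OF u(2) h(4) clE clE1] .
            obtain k' where k': "tk E k' (subst 0 (cont E0) b) (subst 0 (cont E1) b1)"
              using tk_subst[OF 2(2) QE tc] by blast
            have "tk E (j1 + k') p0' (plug F1 (Reset (subst0 (cont E1) b1)))"
              using ctxk_plug[OF t(2) tk_reset[OF k']] h(2) by simp
            then have "Srel p0' (plug F1 (Reset (subst0 (cont E1) b1)))"
              unfolding Srel_def using cl0' red_closed[OF st cl1] E by blast
            then show ?thesis using st by blast
          qed
        qed
      qed
    qed
  qed
qed

lemma S_tc_val:
  assumes E: "E \<in> Es" and tk: "tk E k p0 p1" and v: "is_val p0"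
  shows "is_val p1"
proof -
  obtain b where "p0 = Lam b" using v is_val_iff by blast
  with tk have "tk E k (Lam b) p1" by simp
  then show ?thesis
    by (cases rule: tk_LamE) (use env_val[OF B_env[OF E]] in auto)
qed

lemma S_tc_stuck:
  assumes E: "E \<in> Es" and tk: "tk E k p0 p1" and cl0: "closedn 0 p0" and cl1: "closedn 0 p1"
    and st: "stuck p0"
  shows "stuck p1"
proof -
  have env: "is_env E" using B_env E .
  obtain E0 b where h: "is_pctx E0" "p0 = plug E0 (Shift b)"
    using closed_stuck cl0 st unfolding stuck_def by blast
  have fE0: "is_fctx E0" using pctx_fctx h(1) by blast
  have basecase: "\<And>Eb c E1a. (plug Eb (Shift b), c) \<in> E \<Longrightarrow> is_pctx Eb \<Longrightarrow> is_pctx E1a \<Longrightarrow> p1 = plug E1a c \<Longrightarrow> stuck p1"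
  proof -
    fix Eb c E1a assume a: "(plug Eb (Shift b), c) \<in> E" "is_pctx Eb" "is_pctx E1a" "p1 = plug E1a c"
    have "stuck (plug Eb (Shift b))" using shift_stuck a(2) by blast
    then have "stuck c" using env_stuck[OF env a(1)] unfolding stuck_def by blast
    moreover have "closedn 0 c" using env_pair[OF env a(1)] by blast
    ultimately obtain Ec b1 where "is_pctx Ec" "c = plug Ec (Shift b1)"
      using closed_stuck unfolding stuck_def by blast
    then show "stuck p1" using a(3,4) shift_stuck[of "ccomp E1a Ec" b1] by simp
  qed
  from DK[OF tk[unfolded h(2)] fE0] show ?thesis
  proof (elim disjE exE conjE)
    fix Ea Eb E1a c j assume d: "E0 = ccomp Ea Eb" "(plug Eb (Shift b), c) \<in> E" "p1 = plug E1a c" "ctxk E j Ea E1a"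
    have "is_pctx Ea" "is_pctx Eb" using h(1) d(1) by auto
    then show ?thesis using basecase d ctxk_pctx by blast
  next
    fix G0 G1 j w w1 assume "(w, w1) \<in> E" "\<not> is_val w1" "is_val w"
    then show ?thesis using env_val[OF env] by blast
  next
    fix E1 z i1 i2 assume u: "p1 = plug E1 z" "ctxk E i1 E0 E1" "tk E i2 (Shift b) z" "i1 + i2 = k"
    have pE1: "is_pctx E1" using ctxk_pctx u(2) h(1) by blast
    from u(3) show ?thesis
    proof (cases rule: tk_ShiftE)
      case 1 then show ?thesis using basecase[of Hole z E1] pE1 u(1) by simp
    next
      case (2 b1) then show ?thesis using shift_stuck[OF pE1] u(1) by simp
    qed
  qed
qed

lemma S_norm:
  assumes T: "(E,a0,a1) \<in> Ts" and fF0: "is_fctx F0" and c: "ctxk E j F0 F1"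
    and cl0: "closedn 0 (plug F0 a0)" and cl1: "closedn 0 (plug F1 a1)" and irr: "irreducible a0"
  shows "\<exists>p1' E' k'. reds (plug F1 a1) p1' \<and> E' \<in> Es \<and> tk E' k' (plug F0 a0) p1' \<and> closedn 0 p1'"
proof -
  have fF1: "is_fctx F1" using ctxk_fctx c fF0 by blast
  have ca: "closedn 0 a0" using B_trip T by blast
  have "is_val a0 \<or> stuck a0" using closed_nf ca irr by blast
  then obtain w where w: "reds a1 w" "insert (a0,w) E \<in> Es"
    using B_val[OF T] B_stuck[OF T] by blast
  define E' where "E' = insert (a0,w) E"
  have env': "is_env E'" using B_env w(2) E'_def by simp
  have cw: "closedn 0 w" using env_pair[OF env', of a0 w] E'_def by simp
  have "ctxk E' j F0 F1" using ctxk_mono[OF c] E'_def by auto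
  moreover have "tk E' (Suc 0) a0 w" using E'_def by (auto intro: tk_base)
  ultimately have "tk E' (j + Suc 0) (plug F0 a0) (plug F1 w)" using ctxk_plug by blast
  moreover have "reds (plug F1 a1) (plug F1 w)" using reds_ctx[OF w(1) fF1] .
  moreover have "closedn 0 (plug F1 w)" using cl1 cw fF1 closedn_plug by auto
  ultimately show ?thesis using w(2) E'_def by blast
qed

lemma Srel_step:
  assumes S: "Srel p0 p1" and r: "red p0 p0'"
  shows "\<exists>p1'. reds p1 p1' \<and> Srel p0' p1'"
proof -
  have cl0: "closedn 0 p0" and cl1: "closedn 0 p1" using S unfolding Srel_def by auto
  from S consider (tc) E k where "E \<in> Es" "tk E k p0 p1"
    | (act) E F0 F1 a0 a1 j where "(E,a0,a1) \<in> Ts" "is_fctx F0" "ctxk E j F0 F1" "p0 = plug F0 a0" "p1 = plug F1 a1"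
    unfolding Srel_def by blast
  then show ?thesis
  proof cases
    case tc then show ?thesis using S_tc_step cl0 cl1 r by blast
  next
    case act
    have fF1: "is_fctx F1" using ctxk_fctx act by blast
    show ?thesis
    proof (cases "irreducible a0")
      case True
      then obtain p1' E' k' where n: "reds p1 p1'" "E' \<in> Es" "tk E' k' p0 p1'" "closedn 0 p1'"
        using S_norm[OF act(1,2,3)] act cl0 cl1 by metis
      then obtain p1'' where "reds p1' p1''" "Srel p0' p1''" using S_tc_step[OF n(2) n(3) cl0 n(4) r] by blast
      then show ?thesis using n(1) by (meson rtranclp_trans)
    next
      case False
      then obtain a0' where ra: "red a0 a0'" unfolding irreducible_def by blast
      have p0': "p0' = plug F0 a0'" using red_det[OF r] red_ctx[OF ra act(2)] act(4) by simp
      obtain a1' where b: "reds a1 a1'" "(E,a0',a1') \<in> Ts" using B_step[OF act(1) ra] by blast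
      have st: "reds p1 (plug F1 a1')" using reds_ctx[OF b(1) fF1] act(5) by simp
      have "Srel p0' (plug F1 a1')"
        unfolding Srel_def using b(2) act(2,3) p0' red_closed[OF r cl0] reds_closed[OF st cl1] by blast
      then show ?thesis using st by blast
    qed
  qed
qed

lemma Srel_nf:
  assumes S: "Srel p0 p1" and irr: "irreducible p0"
  shows "\<exists>p1' E k. reds p1 p1' \<and> E \<in> Es \<and> tk E k p0 p1' \<and> closedn 0 p1'"
proof -
  have cl0: "closedn 0 p0" and cl1: "closedn 0 p1" using S unfolding Srel_def by auto
  from S consider (tc) E k where "E \<in> Es" "tk E k p0 p1"
    | (act) E F0 F1 a0 a1 j where "(E,a0,a1) \<in> Ts" "is_fctx F0" "ctxk E j F0 F1" "p0 = plug F0 a0" "p1 = plug F1 a1"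
    unfolding Srel_def by blast
  then show ?thesis
  proof cases
    case tc then show ?thesis using cl1 by blast
  next
    case act
    have "irreducible a0" using irr act red_ctx unfolding irreducible_def by blast
    then show ?thesis using S_norm[OF act(1,2,3)] act cl0 cl1 by metis
  qed
qed

lemma Srel_obs:
  assumes "reds p0 x" "Srel p0 p1"
  shows "(is_val x \<longrightarrow> (\<exists>y. reds p1 y \<and> is_val y)) \<and> (stuck x \<longrightarrow> (\<exists>y. reds p1 y \<and> stuck y))"
  using assms
proof (induction arbitrary: p1 rule: converse_rtranclp_induct)
  case base
  show ?case
  proof (intro conjI impI)
    assume v: "is_val x"
    then obtain p1' E k where n: "reds p1 p1'" "E \<in> Es" "tk E k x p1'" "closedn 0 p1'"
      using Srel_nf[OF base] val_irred by blast
    then show "\<exists>y. reds p1 y \<and> is_val y" using S_tc_val v by blast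
  next
    assume st: "stuck x"
    then obtain p1' E k where n: "reds p1 p1'" "E \<in> Es" "tk E k x p1'" "closedn 0 p1'"
      using Srel_nf[OF base] unfolding stuck_def by blast
    have "closedn 0 x" using base unfolding Srel_def by blast
    then show "\<exists>y. reds p1 y \<and> stuck y" using S_tc_stuck n st by blast
  qed
next
  case (step p p')
  obtain p1' where "reds p1 p1'" "Srel p' p1'" using Srel_step[OF step(4) step(1)] by blast
  then show ?case using step(3) by (meson rtranclp_trans)
qed

end



definition ACT :: "rel \<Rightarrow> nat \<Rightarrow> trm \<Rightarrow> trm \<Rightarrow> bool" where
  "ACT Q k p q \<longleftrightarrow> (\<exists>G0 G1 j a b. (a,b) \<in> Q \<and> p = plug G0 a \<and> q = plug G1 b \<and> is_fctx G0 \<and> ctxk Q j G0 G1 \<and> j < k)"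

lemma ACT_I: "(a,b) \<in> Q \<Longrightarrow> p = plug G0 a \<Longrightarrow> q = plug G1 b \<Longrightarrow> is_fctx G0 \<Longrightarrow> ctxk Q j G0 G1 \<Longrightarrow> j < k \<Longrightarrow> ACT Q k p q"
  unfolding ACT_def by blast

lemma DK_ACT:
  assumes "tk Q k (plug F x) q" "is_fctx F"
  shows "ACT Q k (plug F x) q \<or> (\<exists>F1 x1 j1 j2. q = plug F1 x1 \<and> ctxk Q j1 F F1 \<and> tk Q j2 x x1 \<and> j1 + j2 = k)"
  using DK[OF assms]
proof (elim disjE exE conjE)
  fix Fa Fb F1 q1 j assume h: "F = ccomp Fa Fb" "(plug Fb x, q1) \<in> Q" "q = plug F1 q1" "ctxk Q j Fa F1" "j < k"
  then have "ACT Q k (plug F x) q" using assms(2) by (intro ACT_I[of "plug Fb x" q1 Q _ Fa _ F1 j]) auto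
  then show ?thesis by blast
next
  fix G0 G1 j v v1 assume "(v, v1) \<in> Q" "plug F x = plug G0 v" "q = plug G1 v1" "is_fctx G0" "ctxk Q j G0 G1" "j < k"
  then show ?thesis using ACT_I by blast
qed blast

lemma ACT_lift: "ACT Q j p q \<Longrightarrow> ctxk Q i F F1 \<Longrightarrow> is_fctx F \<Longrightarrow> i + j \<le> k \<Longrightarrow> ACT Q k (plug F p) (plug F1 q)"
proof -
  assume a: "ACT Q j p q" "ctxk Q i F F1" "is_fctx F" "i + j \<le> k"
  then obtain G0 G1 l x y where h: "(x,y) \<in> Q" "p = plug G0 x" "q = plug G1 y" "is_fctx G0" "ctxk Q l G0 G1" "l < j"
    unfolding ACT_def by blast
  have "ctxk Q (i + l) (ccomp F G0) (ccomp F1 G1)" using ctxk_comp[OF a(2) h(5)] .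
  then show ?thesis using h a by (intro ACT_I[of x y Q _ "ccomp F G0" _ "ccomp F1 G1" "i+l"]) auto
qed

lemma LK_val:
  assumes "tk Q k p0 q" "is_val p0"
  shows "is_val q \<or> ACT Q k p0 q"
proof -
  obtain b where b: "p0 = Lam b" using assms(2) is_val_iff by blast
  with assms(1) have "tk Q k (Lam b) q" by simp
  then show ?thesis
  proof (cases rule: tk_LamE)
    case 1 then show ?thesis using b ACT_I[of p0 q Q p0 Hole q Hole 0 k] ck_hole by auto
  qed simp
qed

lemma LK_stuck:
  assumes tk: "tk Q k p0 q" and cl0: "closedn 0 p0" and st: "stuck p0"
  shows "stuck q \<or> ACT Q k p0 q"
proof -
  obtain E0 b where h: "is_pctx E0" "p0 = plug E0 (Shift b)"
    using closed_stuck cl0 st unfolding stuck_def by blast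
  have fE0: "is_fctx E0" using pctx_fctx h(1) by blast
  from DK_ACT[OF tk[unfolded h(2)] fE0] show ?thesis
  proof (elim disjE exE conjE)
    assume "ACT Q k (plug E0 (Shift b)) q" then show ?thesis using h by simp
  next
    fix E1 z i1 i2 assume u: "q = plug E1 z" "ctxk Q i1 E0 E1" "tk Q i2 (Shift b) z" "i1 + i2 = k"
    have pE1: "is_pctx E1" using ctxk_pctx u(2) h(1) by blast
    from u(3) show ?thesis
    proof (cases rule: tk_ShiftE)
      case 1 then show ?thesis using ACT_I[of "Shift b" z Q p0 E0 q E1 i1 k] u h fE0 by auto
    next
      case (2 b1) then show ?thesis using shift_stuck[OF pE1] u(1) by simp
    qed
  qed
qed

lemma LK_red:
  assumes QC: "Qcl Q" and tk: "tk Q k p0 q" and cl0: "closedn 0 p0" and cl1: "closedn 0 q" and r: "red p0 p0'"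
  shows "(\<exists>q' k'. red q q' \<and> tk Q k' p0' q') \<or> ACT Q k p0 q"
  using r
proof cases
  case (beta F v b)
  note h = beta
  from DK_ACT[OF tk[unfolded h(1)] h(3)] show ?thesis
  proof (elim disjE exE conjE)
    assume "ACT Q k (plug F (App (Lam b) v)) q" then show ?thesis using h by simp
  next
    fix F1 x1 j1 j2 assume t: "q = plug F1 x1" "ctxk Q j1 F F1" "tk Q j2 (App (Lam b) v) x1" "j1 + j2 = k"
    have fF1: "is_fctx F1" using ctxk_fctx t(2) h(3) by blast
    from t(3) show ?thesis
    proof (cases rule: tk_AppE)
      case 1 then show ?thesis using ACT_I[of "App (Lam b) v" x1 Q p0 F q F1 j1 k] h t by auto
    next
      case (2 c1 y c2 z)
      note a = 2
      from a(2) show ?thesis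
      proof (cases rule: tk_LamE)
        case 1
        have "ctxk Q (j1 + (c2 + 0)) (ccomp F (CAppL Hole v)) (ccomp F1 (CAppL Hole z))"
          using ctxk_comp[OF t(2) ck_appL[OF a(3) ck_hole]] .
        then show ?thesis using ACT_I[of "Lam b" y Q p0 "ccomp F (CAppL Hole v)" q "ccomp F1 (CAppL Hole z)"] h t a 1 by auto
      next
        case (2 b1)
        note yb = 2
        obtain w where vw: "v = Lam w" using h(4) is_val_iff by blast
        from a(3) have "tk Q c2 (Lam w) z" using vw by simp
        then show ?thesis
        proof (cases rule: tk_LamE)
          case 1
          have "ctxk Q (j1 + (c1 + 0)) (ccomp F (CAppR (Lam b) Hole)) (ccomp F1 (CAppR (Lam b1) Hole))"
            using ctxk_comp[OF t(2) ck_appR[OF a(2)[unfolded 2(1)] _ ck_hole]] by simp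
          then show ?thesis using ACT_I[of v z Q p0 "ccomp F (CAppR (Lam b) Hole)" q "ccomp F1 (CAppR (Lam b1) Hole)"] h t a 1 vw yb by auto
        next
          case (2 w1)
          have zv: "is_val z" using 2 by simp
          obtain k' where k': "tk Q k' (subst 0 v b) (subst 0 z b1)"
            using tk_subst[OF \<open>tk Q c1 b b1\<close> QC a(3)] by blast
          have st: "red q (plug F1 (subst0 z b1))" using red.beta[OF fF1 zv, of b1] t(1) a(1) \<open>y = Lam b1\<close> by simp
          have "tk Q (j1 + k') p0' (plug F1 (subst0 z b1))" using ctxk_plug[OF t(2) k'] h(2) by simp
          then show ?thesis using st by blast
        qed
      qed
    qed
  qed
next
  case (reset F v)
  note h = reset
  from DK_ACT[OF tk[unfolded h(1)] h(3)] show ?thesis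
  proof (elim disjE exE conjE)
    assume "ACT Q k (plug F (Reset v)) q" then show ?thesis using h by simp
  next
    fix F1 x1 j1 j2 assume t: "q = plug F1 x1" "ctxk Q j1 F F1" "tk Q j2 (Reset v) x1" "j1 + j2 = k"
    have fF1: "is_fctx F1" using ctxk_fctx t(2) h(3) by blast
    from t(3) show ?thesis
    proof (cases rule: tk_ResetE)
      case 1 then show ?thesis using ACT_I[of "Reset v" x1 Q p0 F q F1 j1 k] h t by auto
    next
      case (2 y)
      note a = 2
      obtain w where vw: "v = Lam w" using h(4) is_val_iff by blast
      from a(2) have "tk Q j2 (Lam w) y" using vw by simp
      then show ?thesis
      proof (cases rule: tk_LamE)
        case 1
        have "ctxk Q (j1 + 0) (ccomp F (CReset Hole)) (ccomp F1 (CReset Hole))"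
          using ctxk_comp[OF t(2) ck_reset[OF ck_hole]] .
        then show ?thesis using ACT_I[of v y Q p0 "ccomp F (CReset Hole)" q "ccomp F1 (CReset Hole)"] h t a 1 vw by auto
      next
        case (2 w1)
        have yv: "is_val y" using 2 by simp
        have st: "red q (plug F1 y)" using red.reset[OF fF1 yv] t(1) a(1) by simp
        have "tk Q (j1 + j2) p0' (plug F1 y)" using ctxk_plug[OF t(2) a(2)] h(2) by simp
        then show ?thesis using st by blast
      qed
    qed
  qed
next
  case (shift F E0 b)
  note h = shift
  have fE0: "is_fctx E0" using pctx_fctx h(4) by blast
  from DK_ACT[OF tk[unfolded h(1)] h(3)] show ?thesis
  proof (elim disjE exE conjE)
    assume "ACT Q k (plug F (Reset (plug E0 (Shift b)))) q" then show ?thesis using h by simp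
  next
    fix F1 x1 j1 j2 assume t: "q = plug F1 x1" "ctxk Q j1 F F1" "tk Q j2 (Reset (plug E0 (Shift b))) x1" "j1 + j2 = k"
    have fF1: "is_fctx F1" using ctxk_fctx t(2) h(3) by blast
    from t(3) show ?thesis
    proof (cases rule: tk_ResetE)
      case 1 then show ?thesis using ACT_I[of "Reset (plug E0 (Shift b))" x1 Q p0 F q F1 j1 k] h t by auto
    next
      case (2 y)
      note y = 2
      have cR: "ctxk Q (j1 + 0) (ccomp F (CReset Hole)) (ccomp F1 (CReset Hole))"
        using ctxk_comp[OF t(2) ck_reset[OF ck_hole]] .
      from DK_ACT[OF y(2) fE0] show ?thesis
      proof (elim disjE exE conjE)
        assume "ACT Q j2 (plug E0 (Shift b)) y"
        then have "ACT Q k (plug (ccomp F (CReset Hole)) (plug E0 (Shift b))) (plug (ccomp F1 (CReset Hole)) y)"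
          using ACT_lift[OF _ cR] h(3) t(4) by simp
        then show ?thesis using h(1) t(1) y(1) by simp
      next
        fix E1 z i1 i2 assume u: "y = plug E1 z" "ctxk Q i1 E0 E1" "tk Q i2 (Shift b) z" "i1 + i2 = j2"
        from u(3) show ?thesis
        proof (cases rule: tk_ShiftE)
          case 1
          have "ctxk Q (j1 + i1) (ccomp F (CReset E0)) (ccomp F1 (CReset E1))"
            using ctxk_comp[OF t(2) ck_reset[OF u(2)]] .
          then show ?thesis using ACT_I[of "Shift b" z Q p0 "ccomp F (CReset E0)" q "ccomp F1 (CReset E1)"] h t y u 1 fE0 by auto
        next
          case (2 b1)
          have pE1: "is_pctx E1" using ctxk_pctx u(2) h(4) by blast
          have st: "red q (plug F1 (Reset (subst0 (cont E1) b1)))"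
            using red.shift[OF fF1 pE1, of b1] t(1) y(1) u(1) 2(1) by simp
          have clE: "ccl 0 E0" using cl0 h(1,3) fE0 closedn_plug by auto
          have clE1: "ccl 0 E1" using cl1 t(1) y(1) u(1) fF1 pctx_fctx[OF pE1] closedn_plug by auto
          have tc: "tk Q i1 (cont E0) (cont E1)" using tk_cont[OF u(2) h(4) clE clE1] .
          obtain k' where k': "tk Q k' (subst 0 (cont E0) b) (subst 0 (cont E1) b1)"
            using tk_subst[OF 2(2) QC tc] by blast
          have "tk Q (j1 + k') p0' (plug F1 (Reset (subst0 (cont E1) b1)))"
            using ctxk_plug[OF t(2) tk_reset[OF k']] h(2) by simp
          then show ?thesis using st by blast
        qed
      qed
    qed
  qed
qed




definition obs :: "trm \<Rightarrow> trm \<Rightarrow> bool" where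
  "obs x q \<longleftrightarrow> (is_val x \<longrightarrow> (\<exists>y. reds q y \<and> is_val y)) \<and> (stuck x \<longrightarrow> (\<exists>y. reds q y \<and> stuck y))"

lemma obs_reds: "reds q q' \<Longrightarrow> obs x q' \<Longrightarrow> obs x q"
  unfolding obs_def by (meson rtranclp_trans)

context
  fixes Es Ts a0 a1
  assumes B: "env_bisim Es Ts" and T: "({}, a0, a1) \<in> Ts"
begin

lemma Qcl_a: "Qcl {(a0,a1)}"
  using B_trip[OF B T] unfolding Qcl_def by auto

lemma SW:
  assumes act: "ACT {(a0,a1)} k p0 q" and cl1: "closedn 0 q"
    and IH: "\<And>j m. j < k \<Longrightarrow> tk {(a0,a1)} j p0 m \<Longrightarrow> closedn 0 m \<Longrightarrow> obs x m"
  shows "obs x q"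
proof -
  obtain G0 G1 j a b where h: "(a,b) \<in> {(a0,a1)}" "p0 = plug G0 a" "q = plug G1 b" "is_fctx G0"
    "ctxk {(a0,a1)} j G0 G1" "j < k"
    using act unfolding ACT_def by blast
  have ab: "a = a0" "b = a1" using h(1) by auto
  have fG1: "is_fctx G1" using ctxk_fctx h(5) h(4) by blast
  have ca: "closedn 0 a0" "closedn 0 a1" using B_trip[OF B T] by auto
  have clG1: "ccl 0 G1" using cl1 h(3) fG1 closedn_plug by auto
  define m where "m = plug G1 a0"
  have clm: "closedn 0 m" using m_def clG1 ca fG1 closedn_plug by auto
  have "tk {(a0,a1)} (j+0) p0 m" using ctxk_plug[OF h(5) tk_refl] h(2) ab m_def by simp
  then have om: "obs x m" using IH h(6) clm by simp
  have S: "Srel Es Ts m q"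
    unfolding Srel_def[OF B] using clm cl1 T fG1 ctxk_refl[OF fG1] m_def h(3) ab by blast
  show ?thesis unfolding obs_def
  proof (intro conjI impI)
    assume "is_val x"
    then obtain y where "reds m y" "is_val y" using om unfolding obs_def by blast
    then show "\<exists>y. reds q y \<and> is_val y" using Srel_obs[OF B _ S] by blast
  next
    assume "stuck x"
    then obtain y where "reds m y" "stuck y" using om unfolding obs_def by blast
    then show "\<exists>y. reds q y \<and> stuck y" using Srel_obs[OF B _ S] by blast
  qed
qed

lemma OD: "\<forall>p0 q. (red ^^ n) p0 x \<longrightarrow> tk {(a0,a1)} k p0 q \<longrightarrow> closedn 0 p0 \<longrightarrow> closedn 0 q \<longrightarrow> obs x q"
proof (induction n arbitrary: k)
  case 0
  show ?case
  proof (induction k rule: less_induct)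
    case (less k)
    show ?case
    proof (intro allI impI)
      fix p0 q assume a: "(red ^^ 0) p0 x" "tk {(a0,a1)} k p0 q" "closedn 0 p0" "closedn 0 q"
      have px: "p0 = x" using a(1) by simp
      have IH: "\<And>j m. j < k \<Longrightarrow> tk {(a0,a1)} j p0 m \<Longrightarrow> closedn 0 m \<Longrightarrow> obs x m"
        using less a(1,3) by blast
      show "obs x q"
      proof (cases "is_val x")
        case True
        have "is_val p0" using True by (simp only: px)
        then have "is_val q \<or> ACT {(a0,a1)} k p0 q" by (rule LK_val[OF a(2)])
        then show ?thesis
        proof (elim disjE)
          assume "is_val q" then show ?thesis unfolding obs_def stuck_def using True by (metis rtranclp.rtrancl_refl)
        next
          assume "ACT {(a0,a1)} k p0 q" then show ?thesis using SW a(4) IH by blast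
        qed
      next
        case nv: False
        show ?thesis
        proof (cases "stuck x")
          case True
          have "stuck p0" using True by (simp only: px)
          then have "stuck q \<or> ACT {(a0,a1)} k p0 q" by (rule LK_stuck[OF a(2) a(3)])
          then show ?thesis
          proof (elim disjE)
            assume "stuck q" then show ?thesis unfolding obs_def using nv by (metis rtranclp.rtrancl_refl)
          next
            assume "ACT {(a0,a1)} k p0 q" then show ?thesis using SW a(4) IH by blast
          qed
        next
          case False then show ?thesis using nv unfolding obs_def by blast
        qed
      qed
    qed
  qed
next
  case (Suc n)
  show ?case
  proof (induction k rule: less_induct)
    case (less k)
    show ?case
    proof (intro allI impI)
      fix p0 q assume a: "(red ^^ Suc n) p0 x" "tk {(a0,a1)} k p0 q" "closedn 0 p0" "closedn 0 q"
      obtain p' where p': "red p0 p'" "(red ^^ n) p' x" using relpowp_Suc_D2[OF a(1)] by blast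
      have IH: "\<And>j m. j < k \<Longrightarrow> tk {(a0,a1)} j p0 m \<Longrightarrow> closedn 0 m \<Longrightarrow> obs x m"
        using less a(1,3) by blast
      from LK_red[OF Qcl_a a(2) a(3) a(4) p'(1)] show "obs x q"
      proof (elim disjE exE conjE)
        fix q' k' assume s: "red q q'" "tk {(a0,a1)} k' p' q'"
        have "obs x q'" using Suc.IH p'(2) s(2) red_closed[OF p'(1) a(3)] red_closed[OF s(1) a(4)] by blast
        then show ?thesis using obs_reds s(1) by blast
      next
        assume "ACT {(a0,a1)} k p0 q" then show ?thesis using SW a(4) IH by blast
      qed
    qed
  qed
qed

lemma OD_reds: "reds p0 x \<Longrightarrow> tk {(a0,a1)} k p0 q \<Longrightarrow> closedn 0 p0 \<Longrightarrow> closedn 0 q \<Longrightarrow> obs x q"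
  using OD by (metis rtranclp_power)

end

section \<open>Converse bisimulation\<close>

lemma is_env_conv: "is_env E \<Longrightarrow> is_env (converse E)"
  unfolding is_env_def by auto

lemma tclos_conv: "tclos E s t \<Longrightarrow> tclos (converse E) t s"
  unfolding tclos_tk using tk_conv by blast

lemma rtilde_conv: "rtilde E s t \<Longrightarrow> rtilde (converse E) t s"
  unfolding rtilde_def using tclos_conv by blast

lemma rhat_conv: "rhat E F0 F1 \<Longrightarrow> rhat (converse E) F1 F0"
  by (induction rule: rhat.induct) (auto intro: rhat.intros rtilde_conv)

lemma conv_insert: "insert (b,a) (converse E) = converse (insert (a,b) E)"
  by auto

lemma bisim_conv:
  assumes B: "env_bisim Es Ts"
  shows "env_bisim (converse ` Es) ((\<lambda>(E,a,b). (converse E, b, a)) ` Ts)"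
    (is "env_bisim ?Es ?Ts")
proof -
  have memT: "\<And>E a b. (E,a,b) \<in> Ts \<Longrightarrow> (converse E, b, a) \<in> ?Ts"
    by (force intro: image_eqI)
  have memE: "\<And>E. E \<in> Es \<Longrightarrow> converse E \<in> ?Es" by blast
  have invT: "\<And>E' a b. (E',a,b) \<in> ?Ts \<Longrightarrow> \<exists>E. E' = converse E \<and> (E,b,a) \<in> Ts" by auto
  have p1: "env_rel ?Es ?Ts"
  proof -
    have "\<forall>E\<in>?Es. is_env E" using B_env[OF B] is_env_conv by blast
    moreover have "\<forall>(E, t0, t1) \<in> ?Ts. is_env E \<and> closed t0 \<and> closed t1"
      using B_trip[OF B] is_env_conv unfolding closed_def by auto
    ultimately show ?thesis unfolding env_rel_def by blast
  qed
  have p2: "\<forall>E t0 t1. (E, t0, t1) \<in> ?Ts \<longrightarrow>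
       (\<forall>t0'. red t0 t0' \<longrightarrow> (\<exists>t1'. reds t1 t1' \<and> (E, t0', t1') \<in> ?Ts)) \<and>
       (is_val t0 \<longrightarrow> (\<exists>v1. reds t1 v1 \<and> is_val v1 \<and> insert (t0, v1) E \<in> ?Es)) \<and>
       (stuck t0 \<longrightarrow> (\<exists>t1'. reds t1 t1' \<and> stuck t1' \<and> insert (t0, t1') E \<in> ?Es)) \<and>
       (\<forall>t1'. red t1 t1' \<longrightarrow> (\<exists>t0'. reds t0 t0' \<and> (E, t0', t1') \<in> ?Ts)) \<and>
       (is_val t1 \<longrightarrow> (\<exists>v0. reds t0 v0 \<and> is_val v0 \<and> insert (v0, t1) E \<in> ?Es)) \<and>
       (stuck t1 \<longrightarrow> (\<exists>t0'. reds t0 t0' \<and> stuck t0' \<and> insert (t0', t1) E \<in> ?Es))"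
  proof (intro allI impI)
    fix E' t0 t1 assume "(E', t0, t1) \<in> ?Ts"
    then obtain E where E: "E' = converse E" "(E,t1,t0) \<in> Ts" using invT by blast
    note BT = B_T[OF B E(2)]
    show "(\<forall>t0'. red t0 t0' \<longrightarrow> (\<exists>t1'. reds t1 t1' \<and> (E', t0', t1') \<in> ?Ts)) \<and>
       (is_val t0 \<longrightarrow> (\<exists>v1. reds t1 v1 \<and> is_val v1 \<and> insert (t0, v1) E' \<in> ?Es)) \<and>
       (stuck t0 \<longrightarrow> (\<exists>t1'. reds t1 t1' \<and> stuck t1' \<and> insert (t0, t1') E' \<in> ?Es)) \<and>
       (\<forall>t1'. red t1 t1' \<longrightarrow> (\<exists>t0'. reds t0 t0' \<and> (E', t0', t1') \<in> ?Ts)) \<and>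
       (is_val t1 \<longrightarrow> (\<exists>v0. reds t0 v0 \<and> is_val v0 \<and> insert (v0, t1) E' \<in> ?Es)) \<and>
       (stuck t1 \<longrightarrow> (\<exists>t0'. reds t0 t0' \<and> stuck t0' \<and> insert (t0', t1) E' \<in> ?Es))"
    proof (intro conjI allI impI)
      fix t0' assume "red t0 t0'"
      then obtain t1' where "reds t1 t1'" "(E, t1', t0') \<in> Ts" using BT by blast
      then show "\<exists>t1'. reds t1 t1' \<and> (E', t0', t1') \<in> ?Ts" using memT E(1) by blast
    next
      assume "is_val t0"
      then obtain v where "reds t1 v" "is_val v" "insert (v, t0) E \<in> Es" using BT by blast
      then show "\<exists>v1. reds t1 v1 \<and> is_val v1 \<and> insert (t0, v1) E' \<in> ?Es"
        using memE conv_insert E(1) by metis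
    next
      assume "stuck t0"
      then obtain v where "reds t1 v" "stuck v" "insert (v, t0) E \<in> Es" using BT by blast
      then show "\<exists>t1'. reds t1 t1' \<and> stuck t1' \<and> insert (t0, t1') E' \<in> ?Es"
        using memE conv_insert E(1) by metis
    next
      fix t1' assume "red t1 t1'"
      then obtain t0' where "reds t0 t0'" "(E, t1', t0') \<in> Ts" using BT by blast
      then show "\<exists>t0'. reds t0 t0' \<and> (E', t0', t1') \<in> ?Ts" using memT E(1) by blast
    next
      assume "is_val t1"
      then obtain v where "reds t0 v" "is_val v" "insert (t1, v) E \<in> Es" using BT by blast
      then show "\<exists>v0. reds t0 v0 \<and> is_val v0 \<and> insert (v0, t1) E' \<in> ?Es"
        using memE conv_insert E(1) by metis
    next
      assume "stuck t1"
      then obtain v where "reds t0 v" "stuck v" "insert (t1, v) E \<in> Es" using BT by blast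
      then show "\<exists>t0'. reds t0 t0' \<and> stuck t0' \<and> insert (t0', t1) E' \<in> ?Es"
        using memE conv_insert E(1) by metis
    qed
  qed
  have p3: "\<forall>E \<in> ?Es.
       (\<forall>s0 s1 v0 v1. (Lam s0, Lam s1) \<in> E \<longrightarrow> is_val v0 \<longrightarrow> is_val v1 \<longrightarrow>
           rtilde E v0 v1 \<longrightarrow> (E, subst0 v0 s0, subst0 v1 s1) \<in> ?Ts) \<and>
       (\<forall>E0 E1 s0 s1 E0' E1'. is_pctx E0 \<longrightarrow> is_pctx E1 \<longrightarrow>
           (plug E0 (Shift s0), plug E1 (Shift s1)) \<in> E \<longrightarrow>
           is_pctx E0' \<longrightarrow> is_pctx E1' \<longrightarrow> rhat E E0' E1' \<longrightarrow>
           (E, Reset (subst0 (cont2 E0' E0) s0), Reset (subst0 (cont2 E1' E1) s1)) \<in> ?Ts)"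
  proof
    fix E' assume "E' \<in> ?Es"
    then obtain E where E: "E' = converse E" "E \<in> Es" by blast
    show "(\<forall>s0 s1 v0 v1. (Lam s0, Lam s1) \<in> E' \<longrightarrow> is_val v0 \<longrightarrow> is_val v1 \<longrightarrow>
           rtilde E' v0 v1 \<longrightarrow> (E', subst0 v0 s0, subst0 v1 s1) \<in> ?Ts) \<and>
       (\<forall>E0 E1 s0 s1 E0' E1'. is_pctx E0 \<longrightarrow> is_pctx E1 \<longrightarrow>
           (plug E0 (Shift s0), plug E1 (Shift s1)) \<in> E' \<longrightarrow>
           is_pctx E0' \<longrightarrow> is_pctx E1' \<longrightarrow> rhat E' E0' E1' \<longrightarrow>
           (E', Reset (subst0 (cont2 E0' E0) s0), Reset (subst0 (cont2 E1' E1) s1)) \<in> ?Ts)"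
    proof (intro conjI allI impI)
      fix s0 s1 v0 v1 assume a: "(Lam s0, Lam s1) \<in> E'" "is_val v0" "is_val v1" "rtilde E' v0 v1"
      have "(Lam s1, Lam s0) \<in> E" using a(1) E(1) by simp
      moreover have "rtilde E v1 v0" using rtilde_conv[OF a(4)] E(1) by simp
      ultimately have "(E, subst0 v1 s1, subst0 v0 s0) \<in> Ts" using B_lam[OF B E(2)] a(2,3) by blast
      then show "(E', subst0 v0 s0, subst0 v1 s1) \<in> ?Ts" using memT E(1) by blast
    next
      fix E0 E1 s0 s1 E0' E1'
      assume a: "is_pctx E0" "is_pctx E1" "(plug E0 (Shift s0), plug E1 (Shift s1)) \<in> E'"
        "is_pctx E0'" "is_pctx E1'" "rhat E' E0' E1'"
      have "(plug E1 (Shift s1), plug E0 (Shift s0)) \<in> E" using a(3) E(1) by simp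
      moreover have "rhat E E1' E0'" using rhat_conv[OF a(6)] E(1) by simp
      ultimately have "(E, Reset (subst0 (cont2 E1' E1) s1), Reset (subst0 (cont2 E0' E0) s0)) \<in> Ts"
        using B_shift[OF B E(2) a(2) a(1) _ a(5) a(4)] by blast
      then show "(E', Reset (subst0 (cont2 E0' E0) s0), Reset (subst0 (cont2 E1' E1) s1)) \<in> ?Ts"
        using memT E(1) by blast
    qed
  qed
  show ?thesis unfolding env_bisim_def using p1 p2 p3 by blast
qed

lemma tk_plug_any: "(a,b) \<in> Q \<Longrightarrow> \<exists>k. tk Q k (plug C a) (plug C b)"
proof (induction C)
  case Hole then show ?case by (auto intro: tk_base)
next
  case (CLam C) then show ?case by (auto intro: tk_lam)
next
  case (CAppR s C) then show ?case using tk_app[OF tk_refl[of Q s]] by fastforce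
next
  case (CAppL C s) then show ?case using tk_app[OF _ tk_refl[of Q s]] by fastforce
next
  case (CShift C) then show ?case by (auto intro: tk_shift)
next
  case (CReset C) then show ?case by (auto intro: tk_reset)
qed

lemma one_dir:
  assumes B: "env_bisim Es Ts" and T: "({}, t0, t1) \<in> Ts"
    and c0: "closed (plug C t0)" and c1: "closed (plug C t1)"
  shows "((\<exists>v. evals (plug C t0) v \<and> is_val v) \<longrightarrow> (\<exists>v. evals (plug C t1) v \<and> is_val v)) \<and>
     ((\<exists>u. evals (plug C t0) u \<and> stuck u) \<longrightarrow> (\<exists>u. evals (plug C t1) u \<and> stuck u))"
proof -
  obtain k where k: "tk {(t0,t1)} k (plug C t0) (plug C t1)" using tk_plug_any by blast
  have o: "\<And>x. reds (plug C t0) x \<Longrightarrow> obs x (plug C t1)"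
    using OD_reds[OF B T _ k] c0 c1 unfolding closed_def by blast
  show ?thesis
  proof (intro conjI impI)
    assume "\<exists>v. evals (plug C t0) v \<and> is_val v"
    then obtain v where "reds (plug C t0) v" "is_val v" unfolding evals_def by blast
    then obtain y where "reds (plug C t1) y" "is_val y" using o unfolding obs_def by blast
    then show "\<exists>v. evals (plug C t1) v \<and> is_val v" unfolding evals_def using val_irred by blast
  next
    assume "\<exists>v. evals (plug C t0) v \<and> stuck v"
    then obtain v where "reds (plug C t0) v" "stuck v" unfolding evals_def by blast
    then obtain y where "reds (plug C t1) y" "stuck y" using o unfolding obs_def by blast
    then show "\<exists>v. evals (plug C t1) v \<and> stuck v" unfolding evals_def stuck_def by blast
  qed
qed

theorem corollary1:
  fixes t0 t1 :: trm
  assumes "closed t0" and "closed t1"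
  assumes "approx {} t0 t1"
  shows "ctx_equiv t0 t1"
proof -
  obtain Es Ts where B: "env_bisim Es Ts" and T: "({}, t0, t1) \<in> Ts"
    using assms(3) unfolding approx_def by blast
  have B': "env_bisim (converse ` Es) ((\<lambda>(E,a,b). (converse E, b, a)) ` Ts)" using bisim_conv[OF B] .
  have T': "({}, t1, t0) \<in> (\<lambda>(E,a,b). (converse E, b, a)) ` Ts"
    using T by (force intro: image_eqI[of _ _ "({}, t0, t1)"])
  show ?thesis unfolding ctx_equiv_def
  proof (intro allI impI)
    fix C assume c0: "closed (plug C t0)" and c1: "closed (plug C t1)"
    note d1 = one_dir[OF B T c0 c1]
    note d2 = one_dir[OF B' T' c1 c0]
    show "((\<exists>v. evals (plug C t0) v \<and> is_val v) \<longleftrightarrow> (\<exists>v. evals (plug C t1) v \<and> is_val v)) \<and>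
     ((\<exists>u. evals (plug C t0) u \<and> stuck u) \<longleftrightarrow> (\<exists>u. evals (plug C t1) u \<and> stuck u))"
      using d1 d2 by blast
  qed
qed


end
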